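(* Let $1/2<H<1$, let $Z$ be a continuous fractional Brownian motion with Hurst parameter $H$, let $\alpha>0$, $a_t:=H\mathrm{e}^{\alpha t/H}/\alpha$, and $Y^{(\alpha)}_t:=\int_0^t\mathrm{e}^{-\alpha s}\,dZ_{a_s}$ (pathwise Riemann–Stieltjes integral), $t\ge0$. Define for $x\ne0$ $$k_{\alpha,H}(x):=C(\alpha,H)\,\mathrm{e}^{-\alpha(1-H)x/H}\,|1-\mathrm{e}^{-\alpha x/H}|^{2H-2},\qquad C(\alpha,H):=H(2H-1)(\alpha/H)^{2(1-H)}.$$ Then for $0\le s<t$: $$\mathbf{E}\big((Y^{(\alpha)}_t-Y^{(\alpha)}_s)^2\big)=2\int_0^{t-s}(t-s-x)\,k_{\alpha,H}(x)\,dx,$$ $$\mathbf{E}\big(Y^{(\alpha)}_tY^{(\alpha)}_s\big)=\int_0^t(t-x)k_{\alpha,H}(x)\,dx+\int_0^s(s-x)k_{\alpha,H}(x)\,dx-\int_0^{t-s}(t-s-x)k_{\alpha,H}(x)\,dx.$$ Moreover, $\mathbf{E}\big((Y^{(\alpha)}_t)^2\big)=O(t)$ as $t\to\infty$, and for fixed $s\ge0$ $$\lim_{t\to\infty}\mathbf{E}\big(Y^{(\alpha)}_tY^{(\alpha)}_s\big)=s\int_0^\infty k_{\alpha,H}(x)\,dx+\int_0^s(s-x)\,k_{\alpha,H}(x)\,dx.$$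
   Context: A fractional Brownian motion with Hurst parameter $H$ is a centered Gaussian process on $[0,\infty)$ with covariance $\frac12(t^{2H}+s^{2H}-|t-s|^{2H})$. *)

theory Defs
  imports "HOL-Probability.Probability" "HOL-Library.Landau_Symbols"
begin

definition has_RS_integral ::
  "(real \<Rightarrow> real) \<Rightarrow> (real \<Rightarrow> real) \<Rightarrow> real \<Rightarrow> real \<Rightarrow> real \<Rightarrow> bool" where
  "has_RS_integral f g a b I \<longleftrightarrow>
     (\<forall>\<epsilon>>0. \<exists>\<delta>>0. \<forall>(n::nat) (x::nat \<Rightarrow> real) (\<xi>::nat \<Rightarrow> real).
        x 0 = a \<and> x n = b \<and>
        (\<forall>i<n. x i \<le> \<xi> i \<and> \<xi> i \<le> x (Suc i) \<and> x (Suc i) - x i < \<delta>) \<longrightarrow>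
        \<bar>(\<Sum>i<n. f (\<xi> i) * (g (x (Suc i)) - g (x i))) - I\<bar> < \<epsilon>)"

definition RS_integral ::
  "(real \<Rightarrow> real) \<Rightarrow> (real \<Rightarrow> real) \<Rightarrow> real \<Rightarrow> real \<Rightarrow> real" where
  "RS_integral f g a b = (THE I. has_RS_integral f g a b I)"

definition centered_gaussian_rv :: "'a measure \<Rightarrow> ('a \<Rightarrow> real) \<Rightarrow> bool" where
  "centered_gaussian_rv M X \<longleftrightarrow>
     X \<in> borel_measurable M \<and>
     ((AE \<omega> in M. X \<omega> = 0) \<or> (\<exists>\<sigma>>0. distributed M lborel X (normal_density 0 \<sigma>)))"

definition fBm :: "'a measure \<Rightarrow> real \<Rightarrow> (real \<Rightarrow> 'a \<Rightarrow> real) \<Rightarrow> bool" where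
  "fBm M H Z \<longleftrightarrow>
     prob_space M \<and>
     (\<forall>T c. finite T \<longrightarrow> T \<subseteq> {0..} \<longrightarrow>
        centered_gaussian_rv M (\<lambda>\<omega>. \<Sum>t\<in>T. c t * Z t \<omega>)) \<and>
     (\<forall>t\<ge>0. \<forall>s\<ge>0. integral\<^sup>L M (\<lambda>\<omega>. Z t \<omega> * Z s \<omega>)
        = (t powr (2*H) + s powr (2*H) - \<bar>t - s\<bar> powr (2*H)) / 2)"

definition C_const :: "real \<Rightarrow> real \<Rightarrow> real" where
  "C_const \<alpha> H = H * (2*H - 1) * (\<alpha> / H) powr (2 * (1 - H))"

definition k_fun :: "real \<Rightarrow> real \<Rightarrow> real \<Rightarrow> real" where
  "k_fun \<alpha> H x = C_const \<alpha> H * exp (- \<alpha> * (1 - H) * x / H)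
                   * \<bar>1 - exp (- \<alpha> * x / H)\<bar> powr (2*H - 2)"

end

theory Submission
  imports Defs
begin


lemma RS_cell:
  fixes f f' g :: "real \<Rightarrow> real"
  assumes fd: "\<And>x. (f has_real_derivative f' x) (at x)"
    and cf': "continuous_on UNIV f'"
    and cg: "continuous_on {a..b} g"
    and B: "\<And>u. u \<in> {a..b} \<Longrightarrow> \<bar>f' u\<bar> \<le> B"
    and eta: "\<And>x y. x \<in> {a..b} \<Longrightarrow> y \<in> {a..b} \<Longrightarrow> \<bar>x - y\<bar> \<le> q - p \<Longrightarrow> \<bar>g x - g y\<bar> \<le> \<eta>"
    and pq: "a \<le> p" "p \<le> \<xi>" "\<xi> \<le> q" "q \<le> b"
  shows "\<bar>f \<xi> * (g q - g p) - ((f q * g q - integral {a..q} (\<lambda>u. f' u * g u))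
             - (f p * g p - integral {a..p} (\<lambda>u. f' u * g u)))\<bar> \<le> (q - p) * (B * \<eta>)"
proof -
  have ftc: "integral {x..y} f' = f y - f x" if "x \<le> y" for x y
  proof -
    have "(f' has_integral (f y - f x)) {x..y}"
      apply (rule fundamental_theorem_of_calculus[OF that])
      using fd by (auto simp: has_real_derivative_iff_has_vector_derivative[symmetric]
          intro: has_field_derivative_at_within)
    then show ?thesis by (rule integral_unique)
  qed
  have cf'': "continuous_on S f'" for S using cf' continuous_on_subset by blast
  have cgs: "continuous_on {x..y} g" if "a \<le> x" "y \<le> b" for x y
    using cg continuous_on_subset that by fastforce
  have cfg: "continuous_on {x..y} (\<lambda>u. f' u * g u)" if "a \<le> x" "y \<le> b" for x y
    by (intro continuous_intros cf'' cgs that)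
  have int: "(\<lambda>u. f' u * g u) integrable_on {x..y}" if "a \<le> x" "y \<le> b" for x y
    by (rule integrable_continuous_real[OF cfg[OF that]])
  have c1: "integral {a..p} (\<lambda>u. f' u * g u) + integral {p..q} (\<lambda>u. f' u * g u)
      = integral {a..q} (\<lambda>u. f' u * g u)"
    by (rule Henstock_Kurzweil_Integration.integral_combine) (use pq int in auto)
  have c2: "integral {p..\<xi>} (\<lambda>u. f' u * g u) + integral {\<xi>..q} (\<lambda>u. f' u * g u)
      = integral {p..q} (\<lambda>u. f' u * g u)"
    by (rule Henstock_Kurzweil_Integration.integral_combine) (use pq int in auto)
  define J1 where "J1 = integral {p..\<xi>} (\<lambda>u. f' u * (g u - g p))"
  define J2 where "J2 = integral {\<xi>..q} (\<lambda>u. f' u * (g u - g q))"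
  have fi: "f' integrable_on {x..y}" for x y by (rule integrable_continuous_real[OF cf''])
  have J1e: "J1 = integral {p..\<xi>} (\<lambda>u. f' u * g u) - g p * (f \<xi> - f p)"
  proof -
    have "J1 = integral {p..\<xi>} (\<lambda>u. f' u * g u - g p * f' u)"
      unfolding J1_def by (simp add: algebra_simps)
    also have "\<dots> = integral {p..\<xi>} (\<lambda>u. f' u * g u) - integral {p..\<xi>} (\<lambda>u. g p * f' u)"
      by (rule integral_diff) (use int pq integrable_on_cmult_left[OF fi] in auto)
    also have "integral {p..\<xi>} (\<lambda>u. g p * f' u) = g p * (f \<xi> - f p)"
      using ftc[of p \<xi>] pq by simp
    finally show ?thesis .
  qed
  have J2e: "J2 = integral {\<xi>..q} (\<lambda>u. f' u * g u) - g q * (f q - f \<xi>)"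
  proof -
    have "J2 = integral {\<xi>..q} (\<lambda>u. f' u * g u - g q * f' u)"
      unfolding J2_def by (simp add: algebra_simps)
    also have "\<dots> = integral {\<xi>..q} (\<lambda>u. f' u * g u) - integral {\<xi>..q} (\<lambda>u. g q * f' u)"
      by (rule integral_diff) (use int pq integrable_on_cmult_left[OF fi] in auto)
    also have "integral {\<xi>..q} (\<lambda>u. g q * f' u) = g q * (f q - f \<xi>)"
      using ftc[of \<xi> q] pq by simp
    finally show ?thesis .
  qed
  have eq: "f \<xi> * (g q - g p) - ((f q * g q - integral {a..q} (\<lambda>u. f' u * g u))
             - (f p * g p - integral {a..p} (\<lambda>u. f' u * g u))) = J1 + J2"
    unfolding J1e J2e using c1 c2 by (simp add: algebra_simps)
  have b1: "\<bar>J1\<bar> \<le> (B * \<eta>) * (\<xi> - p)"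
    unfolding J1_def real_norm_def[symmetric]
  proof (rule integral_bound)
    show "continuous_on {p..\<xi>} (\<lambda>u. f' u * (g u - g p))"
      by (intro continuous_intros cf'' cgs) (use pq in auto)
    fix u assume u: "u \<in> {p..\<xi>}"
    have "\<bar>f' u\<bar> \<le> B" using B[of u] u pq by auto
    moreover have "\<bar>g u - g p\<bar> \<le> \<eta>" using eta[of u p] u pq by auto
    ultimately show "norm (f' u * (g u - g p)) \<le> B * \<eta>"
      by (simp add: abs_mult mult_mono')
  qed (use pq in auto)
  have b2: "\<bar>J2\<bar> \<le> (B * \<eta>) * (q - \<xi>)"
    unfolding J2_def real_norm_def[symmetric]
  proof (rule integral_bound)
    show "continuous_on {\<xi>..q} (\<lambda>u. f' u * (g u - g q))"
      by (intro continuous_intros cf'' cgs) (use pq in auto)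
    fix u assume u: "u \<in> {\<xi>..q}"
    have "\<bar>f' u\<bar> \<le> B" using B[of u] u pq by auto
    moreover have "\<bar>g u - g q\<bar> \<le> \<eta>" using eta[of u q] u pq by auto
    ultimately show "norm (f' u * (g u - g q)) \<le> B * \<eta>"
      by (simp add: abs_mult mult_mono')
  qed (use pq in auto)
  show ?thesis unfolding eq using b1 b2 by (simp add: algebra_simps)
qed

lemma partition_mono:
  fixes x :: "nat \<Rightarrow> real"
  assumes "\<forall>i<n. x i \<le> \<xi> i \<and> \<xi> i \<le> x (Suc i)" "i \<le> j" "j \<le> n"
  shows "x i \<le> x j"
  using assms(2,3)
proof (induction j rule: dec_induct)
  case (step m)
  then show ?case using assms(1)[rule_format, of m] by auto
qed simp

lemma RS_ibp:
  fixes f f' g :: "real \<Rightarrow> real"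
  assumes ab: "a \<le> b"
    and fd: "\<And>x. (f has_real_derivative f' x) (at x)"
    and cf': "continuous_on UNIV f'"
    and cg: "continuous_on {a..b} g"
  shows "has_RS_integral f g a b (f b * g b - f a * g a - integral {a..b} (\<lambda>u. f' u * g u))"
  unfolding has_RS_integral_def
proof (intro allI impI)
  fix \<epsilon> :: real assume e: "\<epsilon> > 0"
  have "bounded (f' ` {a..b})"
    by (intro compact_imp_bounded compact_continuous_image continuous_on_subset[OF cf']) auto
  then obtain B0 where B0': "\<forall>u\<in>{a..b}. \<bar>f' u\<bar> \<le> B0"
    unfolding bounded_real by auto
  then have B0: "\<And>u. u \<in> {a..b} \<Longrightarrow> \<bar>f' u\<bar> \<le> B0" by blast
  define B where "B = max B0 0 + 1"
  have Bpos: "B > 0" unfolding B_def by auto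
  have Bb: "\<And>u. u \<in> {a..b} \<Longrightarrow> \<bar>f' u\<bar> \<le> B" using B0 unfolding B_def by fastforce
  define \<eta> where "\<eta> = \<epsilon> / (2 * B * (b - a + 1))"
  have etapos: "\<eta> > 0" unfolding \<eta>_def using e Bpos ab by auto
  have "uniformly_continuous_on {a..b} g"
    by (rule compact_uniformly_continuous[OF cg compact_Icc])
  then obtain d where d: "d > 0" and dd: "\<And>x y. x \<in> {a..b} \<Longrightarrow> y \<in> {a..b} \<Longrightarrow> dist y x < d \<Longrightarrow> dist (g y) (g x) < \<eta>"
    unfolding uniformly_continuous_on_def using etapos by metis
  define \<Phi> where "\<Phi> u = f u * g u - integral {a..u} (\<lambda>u. f' u * g u)" for u
  show "\<exists>\<delta>>0. \<forall>n x \<xi>. x 0 = a \<and> x n = b \<and> (\<forall>i<n. x i \<le> \<xi> i \<and> \<xi> i \<le> x (Suc i) \<and> x (Suc i) - x i < \<delta>) \<longrightarrow>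
        \<bar>(\<Sum>i<n. f (\<xi> i) * (g (x (Suc i)) - g (x i))) - (f b * g b - f a * g a - integral {a..b} (\<lambda>u. f' u * g u))\<bar> < \<epsilon>"
  proof (intro exI[of _ d] conjI allI impI d)
    fix n x \<xi>
    assume P: "x 0 = a \<and> x n = b \<and> (\<forall>i<n. x i \<le> \<xi> i \<and> \<xi> i \<le> x (Suc i) \<and> x (Suc i) - x i < d)"
    have P1: "\<forall>i<n. x i \<le> \<xi> i \<and> \<xi> i \<le> x (Suc i)" using P by auto
    have xa: "a \<le> x i" if "i \<le> n" for i using partition_mono[OF P1, of 0 i] that P by auto
    have xb: "x i \<le> b" if "i \<le> n" for i using partition_mono[OF P1, of i n] that P by auto
    have cell: "\<bar>f (\<xi> i) * (g (x (Suc i)) - g (x i)) - (\<Phi> (x (Suc i)) - \<Phi> (x i))\<bar>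
        \<le> (x (Suc i) - x i) * (B * \<eta>)" if i: "i < n" for i
      unfolding \<Phi>_def
    proof (rule RS_cell[OF fd cf' cg Bb])
      fix y z assume yz: "y \<in> {a..b}" "z \<in> {a..b}" "\<bar>y - z\<bar> \<le> x (Suc i) - x i"
      have "dist y z < d" using yz P i by (auto simp: dist_real_def)
      then show "\<bar>g y - g z\<bar> \<le> \<eta>" using dd[OF yz(2,1)] by (simp add: dist_real_def)
    qed (use P i xa[of i] xb[of "Suc i"] in auto)
    have tel: "(\<Sum>i<n. \<Phi> (x (Suc i)) - \<Phi> (x i)) = \<Phi> b - \<Phi> a"
      using sum_lessThan_telescope[of "\<lambda>i. \<Phi> (x i)" n] P by simp
    have Phi: "\<Phi> b - \<Phi> a = f b * g b - f a * g a - integral {a..b} (\<lambda>u. f' u * g u)"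
      unfolding \<Phi>_def by simp
    have "\<bar>(\<Sum>i<n. f (\<xi> i) * (g (x (Suc i)) - g (x i))) - (\<Phi> b - \<Phi> a)\<bar>
        = \<bar>\<Sum>i<n. f (\<xi> i) * (g (x (Suc i)) - g (x i)) - (\<Phi> (x (Suc i)) - \<Phi> (x i))\<bar>"
      unfolding tel[symmetric] sum_subtractf by simp
    also have "\<dots> \<le> (\<Sum>i<n. \<bar>f (\<xi> i) * (g (x (Suc i)) - g (x i)) - (\<Phi> (x (Suc i)) - \<Phi> (x i))\<bar>)"
      by (rule sum_abs)
    also have "\<dots> \<le> (\<Sum>i<n. (x (Suc i) - x i) * (B * \<eta>))"
      by (rule sum_mono) (use cell in auto)
    also have "\<dots> = (b - a) * (B * \<eta>)"
      unfolding sum_distrib_right[symmetric] using sum_lessThan_telescope[of x n] P by simp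
    also have "\<dots> < \<epsilon>"
    proof -
      have "(b - a) * (B * \<eta>) = \<epsilon> * (b - a) / (2 * (b - a + 1))"
      proof -
        have "b - a + 1 \<noteq> 0" "B \<noteq> 0" using ab Bpos by auto
        then have "B * \<eta> = \<epsilon> / (2 * (b - a + 1))" unfolding \<eta>_def by simp
        then show ?thesis by simp
      qed
      also have "\<dots> < \<epsilon>"
      proof -
        have "\<epsilon> * (b - a) < \<epsilon> * (2 * (b - a + 1))" using e ab by (intro mult_strict_left_mono) auto
        then show ?thesis using e ab by (simp add: divide_less_eq)
      qed
      finally show ?thesis .
    qed
    finally show "\<bar>(\<Sum>i<n. f (\<xi> i) * (g (x (Suc i)) - g (x i))) - (f b * g b - f a * g a - integral {a..b} (\<lambda>u. f' u * g u))\<bar> < \<epsilon>"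
      unfolding Phi .
  qed
qed

lemma RS_unique:
  assumes ab: "a \<le> b" and I: "has_RS_integral f g a b I"
  shows "RS_integral f g a b = I"
proof -
  have uniq: "J = I" if J: "has_RS_integral f g a b J" for J
  proof (rule ccontr)
    assume ne: "J \<noteq> I"
    define \<epsilon> where "\<epsilon> = \<bar>J - I\<bar> / 2"
    have e: "\<epsilon> > 0" using ne unfolding \<epsilon>_def by auto
    obtain d1 where d1: "d1 > 0" and D1: "\<And>n x \<xi>. x 0 = a \<and> x n = b \<and> (\<forall>i<n. x i \<le> \<xi> i \<and> \<xi> i \<le> x (Suc i) \<and> x (Suc i) - x i < d1) \<Longrightarrow>
        \<bar>(\<Sum>i<n. f (\<xi> i) * (g (x (Suc i)) - g (x i))) - I\<bar> < \<epsilon>"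
      using I e unfolding has_RS_integral_def by meson
    obtain d2 where d2: "d2 > 0" and D2: "\<And>n x \<xi>. x 0 = a \<and> x n = b \<and> (\<forall>i<n. x i \<le> \<xi> i \<and> \<xi> i \<le> x (Suc i) \<and> x (Suc i) - x i < d2) \<Longrightarrow>
        \<bar>(\<Sum>i<n. f (\<xi> i) * (g (x (Suc i)) - g (x i))) - J\<bar> < \<epsilon>"
      using J e unfolding has_RS_integral_def by meson
    define d where "d = min d1 d2"
    have dpos: "d > 0" using d1 d2 unfolding d_def by auto
    obtain n :: nat where n: "(b - a) / d < n" using reals_Archimedean2 by blast
    have "0 \<le> (b - a) / d" using ab dpos by simp
    then have "0 < real n" using n by linarith
    then have npos: "n > 0" by simp
    define x where "x i = a + (b - a) * real i / real n" for i
    have x0: "x 0 = a" and xn: "x n = b" unfolding x_def using npos by auto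
    have step: "x (Suc i) - x i = (b - a) / n" for i unfolding x_def using npos by (simp add: field_simps)
    have "(b - a) / n < d" using n dpos npos by (simp add: field_simps)
    moreover have "0 \<le> (b - a) / n" using ab by simp
    ultimately have ok: "\<forall>i<n. x i \<le> x i \<and> x i \<le> x (Suc i) \<and> x (Suc i) - x i < d"
      using step by (metis diff_ge_0_iff_ge order.refl)
    have "\<bar>(\<Sum>i<n. f (x i) * (g (x (Suc i)) - g (x i))) - I\<bar> < \<epsilon>"
      by (rule D1) (use x0 xn ok d_def in auto)
    moreover have "\<bar>(\<Sum>i<n. f (x i) * (g (x (Suc i)) - g (x i))) - J\<bar> < \<epsilon>"
      by (rule D2) (use x0 xn ok d_def in auto)
    ultimately show False unfolding \<epsilon>_def by (simp add: abs_if split: if_splits)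
  qed
  show ?thesis unfolding RS_integral_def
    using I uniq by (rule the_equality)
qed


definition qq :: "real \<Rightarrow> real \<Rightarrow> real \<Rightarrow> real" where
  "qq \<alpha> H x = 1 - exp (- \<alpha> * x / H)"
definition KK :: "real \<Rightarrow> real \<Rightarrow> real" where
  "KK \<alpha> H = (H / \<alpha>) powr (2 * H) / 2"
definition c0 :: "real \<Rightarrow> real \<Rightarrow> real \<Rightarrow> real" where
  "c0 \<alpha> H x = KK \<alpha> H * (exp (\<alpha> * x) + exp (- \<alpha> * x) - exp (\<alpha> * x) * \<bar>qq \<alpha> H x\<bar> powr (2 * H))"
definition cd :: "real \<Rightarrow> real \<Rightarrow> real \<Rightarrow> real" where
  "cd \<alpha> H x = KK \<alpha> H * (\<alpha> * exp (\<alpha> * x) - \<alpha> * exp (- \<alpha> * x)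
     - exp (\<alpha> * x) * (\<alpha> * \<bar>qq \<alpha> H x\<bar> powr (2 * H) + 2 * \<alpha> * exp (- \<alpha> * x / H) * \<bar>qq \<alpha> H x\<bar> powr (2 * H - 1)))"

lemma alg: "(H::real) \<noteq> 0 \<Longrightarrow> K*(\<alpha>*e1*\<alpha> + e2*\<alpha>*\<alpha> - (e1*\<alpha>*(\<alpha>*(P*(1-E)^2) + 2*\<alpha>*E*(P*(1-E))) + e1*(2*H*(P*(1-E))*(\<alpha>/H*E)*\<alpha> + (E*(-\<alpha>/H)*(2*\<alpha>))*(P*(1-E)) + (2*H-1)*P*(\<alpha>/H*E)*(2*\<alpha>*E))))
  = \<alpha>^2*(K*(e1+e2-e1*(P*(1-E)^2))) - H*(2*H-1)*(\<alpha>/H)^2*(2*K)*(e1*E)*P"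
  by (simp add: field_simps power2_eq_square)

lemma alg2:
  fixes x \<alpha> H K e1 e2 E Q2 Q1 Q0 :: real
  assumes "H \<noteq> 0"
  shows "0 * (\<alpha> * e1 - \<alpha> * e2 - e1 * (\<alpha> * Q2 + 2 * \<alpha> * E * Q1)) +
   (0 * e1 + e1 * (0 * x + 1 * \<alpha>) * \<alpha> - (0 * e2 + e2 * (0 * x + 1 * - \<alpha>) * \<alpha>) -
    (e1 * (0 * x + 1 * \<alpha>) * (\<alpha> * Q2 + 2 * \<alpha> * E * Q1) +
     (0 * Q2 + 2 * H * Q1 * (\<alpha> / H * E) * \<alpha> +
      ((0 * E + (E * (((0 * x + 1 * - \<alpha>) * H - - \<alpha> * x * 0) / (H * H))) * (2 * \<alpha>)) * Q1
       + ((2 * H - 1) * Q0 * (\<alpha> / H * E)) * (2 * \<alpha> * E))) * e1)) * K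
  = K*(\<alpha>*e1*\<alpha> + e2*\<alpha>*\<alpha> - (e1*\<alpha>*(\<alpha>*Q2 + 2*\<alpha>*E*Q1) + e1*(2*H*Q1*(\<alpha>/H*E)*\<alpha> + (E*(-\<alpha>/H)*(2*\<alpha>))*Q1 + (2*H-1)*Q0*(\<alpha>/H*E)*(2*\<alpha>*E))))"
  using assms by (simp add: algebra_simps)

context
  fixes \<alpha> H :: real
  assumes H1: "1/2 < H" and H2: "H < 1" and al: "\<alpha> > 0"
begin

lemma qq_pos: "x > 0 \<Longrightarrow> qq \<alpha> H x > 0"
  unfolding qq_def using H1 al by (auto simp: field_simps)

lemma qq_deriv: "((qq \<alpha> H) has_real_derivative (\<alpha> / H) * exp (- \<alpha> * x / H)) (at x)"
  unfolding qq_def[abs_def] using H1 by (auto intro!: derivative_eq_intros simp: field_simps)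

lemma c0_deriv:
  assumes x: "x > 0"
  shows "(c0 \<alpha> H has_real_derivative cd \<alpha> H x) (at x)"
proof -
  define f where "f y = KK \<alpha> H * (exp (\<alpha> * y) + exp (- \<alpha> * y) - exp (\<alpha> * y) * (qq \<alpha> H y) powr (2 * H))" for y
  have "(f has_real_derivative cd \<alpha> H x) (at x)"
  proof -
    have "(f has_real_derivative KK \<alpha> H * (\<alpha> * exp (\<alpha> * x) - \<alpha> * exp (- \<alpha> * x)
       - (\<alpha> * exp (\<alpha> * x) * (qq \<alpha> H x) powr (2 * H) + exp (\<alpha> * x) * (2 * H * (qq \<alpha> H x) powr (2 * H - 1) * ((\<alpha> / H) * exp (- \<alpha> * x / H)))))) (at x)"
      unfolding f_def
      by (rule derivative_eq_intros refl qq_deriv DERIV_fun_powr | use qq_pos[OF x] in simp)+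
    moreover have "KK \<alpha> H * (\<alpha> * exp (\<alpha> * x) - \<alpha> * exp (- \<alpha> * x)
       - (\<alpha> * exp (\<alpha> * x) * (qq \<alpha> H x) powr (2 * H) + exp (\<alpha> * x) * (2 * H * (qq \<alpha> H x) powr (2 * H - 1) * ((\<alpha> / H) * exp (- \<alpha> * x / H)))))
       = cd \<alpha> H x"
      unfolding cd_def using qq_pos[OF x] H1 by (simp add: field_simps)
    ultimately show ?thesis by simp
  qed
  then show ?thesis
    by (rule has_field_derivative_transform_within_open[where S="{0<..}"])
       (use x qq_pos in \<open>auto simp: f_def c0_def abs_of_pos\<close>)
qed

lemma C_const_KK: "C_const \<alpha> H = H * (2 * H - 1) * (\<alpha> / H)^2 * (2 * KK \<alpha> H)"
proof -
  have hp: "\<alpha> / H > 0" using al H1 by auto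
  have "(\<alpha> / H) powr (2 * (1 - H)) = (\<alpha> / H) powr 2 * (\<alpha> / H) powr (- (2 * H))"
    by (simp add: powr_add[symmetric] algebra_simps)
  also have "(\<alpha> / H) powr (- (2 * H)) = (H / \<alpha>) powr (2 * H)"
    using hp by (simp add: powr_minus powr_divide)
  also have "(\<alpha> / H) powr 2 = (\<alpha> / H)^2" using hp by (simp add: powr_numeral)
  finally show ?thesis unfolding C_const_def KK_def by simp
qed

lemma cd_deriv:
  assumes x: "x > 0"
  shows "(cd \<alpha> H has_real_derivative (\<alpha>^2 * c0 \<alpha> H x - k_fun \<alpha> H x)) (at x)"
proof -
  define g where "g y = KK \<alpha> H * (\<alpha> * exp (\<alpha> * y) - \<alpha> * exp (- \<alpha> * y)
     - exp (\<alpha> * y) * (\<alpha> * (qq \<alpha> H y) powr (2 * H) + 2 * \<alpha> * exp (- \<alpha> * y / H) * (qq \<alpha> H y) powr (2 * H - 1)))" for y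
  define q where "q = qq \<alpha> H x"
  define E where "E = exp (- \<alpha> * x / H)"
  have q: "q > 0" unfolding q_def using qq_pos[OF x] .
  have qE: "q = 1 - E" unfolding q_def E_def qq_def ..
  define P where "P = q powr (2 * H - 2)"
  have p2: "q powr (2 * H) = P * q^2" unfolding P_def
    using powr_add[of q "2 * H - 2" 2] q by (simp add: powr_numeral)
  have p1: "q powr (2 * H - 1) = P * q" unfolding P_def
    using powr_add[of q "2 * H - 2" 1] q by simp
  have p0: "q powr (2 * H - 1 - 1) = P" unfolding P_def by (simp add: algebra_simps)
  have kf: "k_fun \<alpha> H x = C_const \<alpha> H * (exp (\<alpha> * x) * E) * P"
  proof -
    have ar: "- \<alpha> * (1 - H) * x / H = \<alpha> * x + - \<alpha> * x / H" using H1 by (simp add: field_simps)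
    have "exp (- \<alpha> * (1 - H) * x / H) = exp (\<alpha> * x) * E"
      unfolding E_def ar exp_add ..
    moreover have "\<bar>1 - exp (- \<alpha> * x / H)\<bar> = q" using q unfolding q_def qq_def by simp
    ultimately show ?thesis unfolding k_fun_def P_def by simp
  qed
  have cf: "c0 \<alpha> H x = KK \<alpha> H * (exp (\<alpha> * x) + exp (- \<alpha> * x) - exp (\<alpha> * x) * (P * q^2))"
  proof -
    have aq: "\<bar>qq \<alpha> H x\<bar> = q" using q unfolding q_def by simp
    show ?thesis unfolding c0_def aq p2 ..
  qed
  have Hn: "H \<noteq> 0" using H1 by auto
  have "(g has_real_derivative (\<alpha>^2 * c0 \<alpha> H x - k_fun \<alpha> H x)) (at x)"
    unfolding g_def
    apply (rule derivative_eq_intros refl qq_deriv DERIV_fun_powr qq_pos[OF x] Hn)+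
    apply (subst alg2[OF Hn])
    unfolding q_def[symmetric] E_def[symmetric]
    unfolding kf cf p2 p1 p0 C_const_KK
    unfolding qE
    by (rule alg[OF Hn])
  then show ?thesis
    by (rule has_field_derivative_transform_within_open[where S="{0<..}"])
       (use x qq_pos in \<open>auto simp: g_def cd_def abs_of_pos\<close>)
qed

end


definition C1 :: "real \<Rightarrow> real \<Rightarrow> real \<Rightarrow> real" where
  "C1 \<alpha> H x = integral {-1..x} (c0 \<alpha> H)"
definition C2 :: "real \<Rightarrow> real \<Rightarrow> real \<Rightarrow> real" where
  "C2 \<alpha> H x = integral {-1..x} (C1 \<alpha> H)"

context
  fixes \<alpha> H :: real
  assumes H1: "1/2 < H" and H2: "H < 1" and al: "\<alpha> > 0"
begin

lemma cont_qq: "continuous_on UNIV (qq \<alpha> H)"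
  unfolding qq_def[abs_def] using H1 by (intro continuous_intros) auto

lemma cont_absqq_powr: "r > 0 \<Longrightarrow> continuous_on UNIV (\<lambda>x. \<bar>qq \<alpha> H x\<bar> powr r)"
  by (intro continuous_on_powr' continuous_intros cont_qq) auto

lemma cont_c0: "continuous_on UNIV (c0 \<alpha> H)"
proof -
  have P: "continuous_on UNIV (\<lambda>x. \<bar>qq \<alpha> H x\<bar> powr (2 * H))" using cont_absqq_powr H1 by auto
  have E: "continuous_on UNIV (\<lambda>x::real. exp (c * x))" for c :: real by (intro continuous_intros)
  show ?thesis unfolding c0_def[abs_def]
    by (intro continuous_on_mult_left continuous_on_add continuous_on_diff continuous_on_mult E P)
qed

lemma cont_cd: "continuous_on UNIV (cd \<alpha> H)"
proof -
  have P: "continuous_on UNIV (\<lambda>x. \<bar>qq \<alpha> H x\<bar> powr (2 * H))" using cont_absqq_powr H1 by auto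
  have P1: "continuous_on UNIV (\<lambda>x. \<bar>qq \<alpha> H x\<bar> powr (2 * H - 1))" using cont_absqq_powr H1 by auto
  have E: "continuous_on UNIV (\<lambda>x::real. exp (c * x))" for c :: real by (intro continuous_intros)
  have E2: "continuous_on UNIV (\<lambda>x. exp (- \<alpha> * x / H))" using H1 by (intro continuous_intros) auto
  show ?thesis unfolding cd_def[abs_def]
    by (intro continuous_on_mult_left continuous_on_add continuous_on_diff continuous_on_mult E E2 P P1
        continuous_on_const)
qed

lemma cd_0: "cd \<alpha> H 0 = 0"
  unfolding cd_def qq_def using H1 by simp

lemma c0_0: "c0 \<alpha> H 0 = 2 * KK \<alpha> H"
  unfolding c0_def qq_def using H1 by simp

lemma C1_deriv: "x > -1 \<Longrightarrow> (C1 \<alpha> H has_real_derivative c0 \<alpha> H x) (at x)"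
proof -
  assume x: "x > -1"
  have "(C1 \<alpha> H has_real_derivative c0 \<alpha> H x) (at x within {-1..x+1})"
    unfolding C1_def[abs_def]
    by (rule integral_has_real_derivative) (use x continuous_on_subset[OF cont_c0] in auto)
  moreover have "at x within {-1..x+1} = at x"
    by (rule at_within_interior) (use x in auto)
  ultimately show ?thesis by simp
qed

lemma C1_cont: "continuous_on {a..b} (C1 \<alpha> H)" if "a > -1" for a b
proof -
  have "continuous (at x) (C1 \<alpha> H)" if "x \<ge> a" for x
    using C1_deriv[of x] \<open>a > -1\<close> that DERIV_continuous by force
  then show ?thesis by (auto intro!: continuous_at_imp_continuous_on)
qed

lemma C2_deriv: "x > -1 \<Longrightarrow> (C2 \<alpha> H has_real_derivative C1 \<alpha> H x) (at x)"
proof -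
  assume x: "x > -1"
  have cc: "continuous_on {-1..x+1} (C1 \<alpha> H)"
  proof -
    have "(C1 \<alpha> H has_real_derivative c0 \<alpha> H y) (at y within {-1..x+1})" if "y \<in> {-1..x+1}" for y
      unfolding C1_def[abs_def]
      by (rule integral_has_real_derivative) (use that continuous_on_subset[OF cont_c0] in auto)
    then show ?thesis
      using DERIV_continuous continuous_on_eq_continuous_within by blast
  qed
  have "(C2 \<alpha> H has_real_derivative C1 \<alpha> H x) (at x within {-1..x+1})"
    unfolding C2_def[abs_def]
    by (rule integral_has_real_derivative) (use x cc in auto)
  moreover have "at x within {-1..x+1} = at x"
    by (rule at_within_interior) (use x in auto)
  ultimately show ?thesis by simp
qed

lemma C2_cont: "continuous_on {a..b} (C2 \<alpha> H)" if "a > -1" for a b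
proof -
  have "continuous (at x) (C2 \<alpha> H)" if "x \<ge> a" for x
    using C2_deriv[of x] \<open>a > -1\<close> that DERIV_continuous by force
  then show ?thesis by (auto intro!: continuous_at_imp_continuous_on)
qed

lemma Q_integral:
  assumes T: "T \<ge> 0"
  shows "((\<lambda>x. (T - x) * c0 \<alpha> H x) has_integral (C2 \<alpha> H T - C2 \<alpha> H 0 - T * C1 \<alpha> H 0)) {0..T}"
proof -
  define F where "F x = (T - x) * C1 \<alpha> H x + C2 \<alpha> H x" for x
  have "((\<lambda>x. (T - x) * c0 \<alpha> H x) has_integral (F T - F 0)) {0..T}"
  proof (rule fundamental_theorem_of_calculus[OF T])
    fix x assume x: "x \<in> {0..T}"
    have d1: "(C1 \<alpha> H has_real_derivative c0 \<alpha> H x) (at x)" using x by (intro C1_deriv) auto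
    have d2: "(C2 \<alpha> H has_real_derivative C1 \<alpha> H x) (at x)" using x by (intro C2_deriv) auto
    have "(F has_real_derivative (T - x) * c0 \<alpha> H x) (at x)"
      unfolding F_def[abs_def]
      apply (rule derivative_eq_intros refl d1 d2)+
      by (simp add: algebra_simps)
    then show "(F has_vector_derivative (T - x) * c0 \<alpha> H x) (at x within {0..T})"
      by (simp add: has_real_derivative_iff_has_vector_derivative[symmetric] has_field_derivative_at_within)
  qed
  moreover have "F T - F 0 = C2 \<alpha> H T - C2 \<alpha> H 0 - T * C1 \<alpha> H 0" unfolding F_def by simp
  ultimately show ?thesis by simp
qed

lemma core_integral:
  assumes T: "T \<ge> 0"
  shows "((\<lambda>x. (T - x) * k_fun \<alpha> H x) has_integral
           (c0 \<alpha> H 0 - c0 \<alpha> H T + \<alpha>^2 * (C2 \<alpha> H T - C2 \<alpha> H 0 - T * C1 \<alpha> H 0))) {0..T}"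
proof -
  define F where "F x = - (T - x) * cd \<alpha> H x - c0 \<alpha> H x + \<alpha>^2 * ((T - x) * C1 \<alpha> H x + C2 \<alpha> H x)" for x
  have "((\<lambda>x. (T - x) * k_fun \<alpha> H x) has_integral (F T - F 0)) {0..T}"
  proof (rule fundamental_theorem_of_calculus_interior[OF T])
    show "continuous_on {0..T} F"
      unfolding F_def[abs_def]
      by (intro continuous_intros continuous_on_subset[OF cont_cd] continuous_on_subset[OF cont_c0]
          C1_cont C2_cont) auto
    fix x assume x: "x \<in> {0<..<T}"
    have d1: "(C1 \<alpha> H has_real_derivative c0 \<alpha> H x) (at x)" using x by (intro C1_deriv) auto
    have d2: "(C2 \<alpha> H has_real_derivative C1 \<alpha> H x) (at x)" using x by (intro C2_deriv) auto
    have d3: "(c0 \<alpha> H has_real_derivative cd \<alpha> H x) (at x)" using x by (intro c0_deriv[OF H1 H2 al]) auto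
    have d4: "(cd \<alpha> H has_real_derivative (\<alpha>^2 * c0 \<alpha> H x - k_fun \<alpha> H x)) (at x)"
      using x by (intro cd_deriv[OF H1 H2 al]) auto
    have "(F has_real_derivative (T - x) * k_fun \<alpha> H x) (at x)"
      unfolding F_def[abs_def]
      apply (rule derivative_eq_intros refl d1 d2 d3 d4)+
      by (simp add: algebra_simps)
    then show "(F has_vector_derivative (T - x) * k_fun \<alpha> H x) (at x)"
      by (simp add: has_real_derivative_iff_has_vector_derivative[symmetric])
  qed
  then show ?thesis unfolding F_def using cd_0 by (simp add: algebra_simps)
qed

end


lemma hk_lborel:
  fixes f :: "real \<Rightarrow> real"
  assumes I: "(f has_integral I) S" and nn: "\<And>x. x \<in> S \<Longrightarrow> 0 \<le> f x"
    and S: "S \<in> sets borel" and fm: "f \<in> borel_measurable borel"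
  shows "set_integrable lborel S f" "(LBINT x:S. f x) = I"
proof -
  define h where "h x = indicator S x * f x" for x
  have hI: "(h has_integral I) UNIV"
  proof -
    have "((\<lambda>x. if x \<in> S then f x else 0) has_integral I) UNIV"
      using I by (simp add: has_integral_restrict_UNIV)
    then show ?thesis by (rule has_integral_eq[rotated]) (auto simp: h_def indicator_def)
  qed
  have hnn: "\<And>x. 0 \<le> h x" using nn by (auto simp: h_def indicator_def)
  have hm: "h \<in> borel_measurable borel" unfolding h_def using S fm by measurable
  have "integral\<^sup>N lborel h = I"
    by (rule nn_integral_has_integral_lborel[OF hm hnn hI])
  then have "integrable lborel h"
    by (intro integrableI_nn_integral_finite[where x=I]) (use hm hnn in auto)
  then show si: "set_integrable lborel S f"
    unfolding set_integrable_def h_def by simp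
  show "(LBINT x:S. f x) = I"
    using set_borel_integral_eq_integral(2)[OF si] integral_unique[OF I] by simp
qed

lemma chain_sub1:
  fixes F :: "real \<Rightarrow> real"
  assumes "(F has_real_derivative D) (at (u - x))"
  shows "((\<lambda>v. F (u - v)) has_real_derivative - D) (at x)"
proof -
  have "((\<lambda>v. u - v) has_real_derivative -1) (at x)" by (auto intro!: derivative_eq_intros)
  from DERIV_chain2[OF assms this] show ?thesis by simp
qed

lemma chain_sub2:
  fixes F :: "real \<Rightarrow> real"
  assumes "(F has_real_derivative D) (at (x - u))"
  shows "((\<lambda>v. F (v - u)) has_real_derivative D) (at x)"
proof -
  have "((\<lambda>v. v - u) has_real_derivative 1) (at x)" by (auto intro!: derivative_eq_intros)
  from DERIV_chain2[OF assms this] show ?thesis by simp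
qed

context
  fixes \<alpha> H :: real
  assumes H1: "1/2 < H" and H2: "H < 1" and al: "\<alpha> > 0"
begin

lemma d_C1: "y > -1 \<Longrightarrow> (C1 \<alpha> H has_real_derivative c0 \<alpha> H y) (at y)"
  by (rule C1_deriv[OF H1 H2 al])
lemma d_C2: "y > -1 \<Longrightarrow> (C2 \<alpha> H has_real_derivative C1 \<alpha> H y) (at y)"
  by (rule C2_deriv[OF H1 H2 al])

lemma ftc_real:
  fixes F f :: "real \<Rightarrow> real"
  assumes "a \<le> b" "\<And>x. x \<in> {a..b} \<Longrightarrow> (F has_real_derivative f x) (at x)"
  shows "(f has_integral (F b - F a)) {a..b}"
  by (rule fundamental_theorem_of_calculus[OF assms(1)])
     (use assms(2) in \<open>auto simp: has_real_derivative_iff_has_vector_derivative[symmetric] intro: has_field_derivative_at_within\<close>)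

lemma L1:
  assumes su: "s \<le> u" and ut: "u \<le> t"
  shows "((\<lambda>v. c0 \<alpha> H \<bar>u - v\<bar>) has_integral (C1 \<alpha> H (u - s) - C1 \<alpha> H 0) + (C1 \<alpha> H (t - u) - C1 \<alpha> H 0)) {s..t}"
proof (rule has_integral_combine[OF su ut])
  have "((\<lambda>v. c0 \<alpha> H (u - v)) has_integral ((- C1 \<alpha> H (u - u)) - (- C1 \<alpha> H (u - s)))) {s..u}"
  proof (rule ftc_real[OF su])
    fix x assume x: "x \<in> {s..u}"
    have d: "(C1 \<alpha> H has_real_derivative c0 \<alpha> H (u - x)) (at (u - x))" using x by (intro d_C1) auto
    show "((\<lambda>v. - C1 \<alpha> H (u - v)) has_real_derivative c0 \<alpha> H (u - x)) (at x)"
      using chain_sub1[OF d] DERIV_minus by fastforce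
  qed
  then have "((\<lambda>v. c0 \<alpha> H (u - v)) has_integral (C1 \<alpha> H (u - s) - C1 \<alpha> H 0)) {s..u}" by simp
  then show "((\<lambda>v. c0 \<alpha> H \<bar>u - v\<bar>) has_integral (C1 \<alpha> H (u - s) - C1 \<alpha> H 0)) {s..u}"
    by (rule has_integral_eq[rotated]) auto
  have "((\<lambda>v. c0 \<alpha> H (v - u)) has_integral (C1 \<alpha> H (t - u) - C1 \<alpha> H (u - u))) {u..t}"
  proof (rule ftc_real[OF ut])
    fix x assume x: "x \<in> {u..t}"
    have d: "(C1 \<alpha> H has_real_derivative c0 \<alpha> H (x - u)) (at (x - u))" using x by (intro d_C1) auto
    show "((\<lambda>v. C1 \<alpha> H (v - u)) has_real_derivative c0 \<alpha> H (x - u)) (at x)"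
      by (rule chain_sub2[OF d])
  qed
  then have "((\<lambda>v. c0 \<alpha> H (v - u)) has_integral (C1 \<alpha> H (t - u) - C1 \<alpha> H 0)) {u..t}" by simp
  then show "((\<lambda>v. c0 \<alpha> H \<bar>u - v\<bar>) has_integral (C1 \<alpha> H (t - u) - C1 \<alpha> H 0)) {u..t}"
    by (rule has_integral_eq[rotated]) auto
qed

lemma L3:
  assumes st: "s \<le> t"
  shows "((\<lambda>u. (C1 \<alpha> H (u - s) - C1 \<alpha> H 0) + (C1 \<alpha> H (t - u) - C1 \<alpha> H 0)) has_integral
          2 * (C2 \<alpha> H (t - s) - C2 \<alpha> H 0) - 2 * (t - s) * C1 \<alpha> H 0) {s..t}"
proof -
  define F where "F u = C2 \<alpha> H (u - s) - C2 \<alpha> H (t - u) - 2 * u * C1 \<alpha> H 0" for u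
  have "((\<lambda>u. (C1 \<alpha> H (u - s) - C1 \<alpha> H 0) + (C1 \<alpha> H (t - u) - C1 \<alpha> H 0)) has_integral (F t - F s)) {s..t}"
  proof (rule ftc_real[OF st])
    fix x assume x: "x \<in> {s..t}"
    have d1: "(C2 \<alpha> H has_real_derivative C1 \<alpha> H (x - s)) (at (x - s))" using x by (intro d_C2) auto
    have d2: "(C2 \<alpha> H has_real_derivative C1 \<alpha> H (t - x)) (at (t - x))" using x by (intro d_C2) auto
    show "(F has_real_derivative (C1 \<alpha> H (x - s) - C1 \<alpha> H 0) + (C1 \<alpha> H (t - x) - C1 \<alpha> H 0)) (at x)"
      unfolding F_def[abs_def]
      apply (rule derivative_eq_intros refl chain_sub2[OF d1] chain_sub1[OF d2])+
      by (simp add: algebra_simps)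
  qed
  moreover have "F t - F s = 2 * (C2 \<alpha> H (t - s) - C2 \<alpha> H 0) - 2 * (t - s) * C1 \<alpha> H 0"
    unfolding F_def by (simp add: algebra_simps)
  ultimately show ?thesis by simp
qed

end


context
  fixes \<alpha> H :: real
  assumes H1: "1/2 < H" and H2: "H < 1" and al: "\<alpha> > 0"
begin

lemma C_nonneg: "C_const \<alpha> H \<ge> 0"
  unfolding C_const_def using H1 by simp

lemma k_nonneg: "k_fun \<alpha> H x \<ge> 0"
  unfolding k_fun_def using C_nonneg by simp

lemma k_zero: "k_fun \<alpha> H 0 = 0"
  unfolding k_fun_def by simp

lemma k_meas: "k_fun \<alpha> H \<in> borel_measurable borel"
  unfolding k_fun_def[abs_def] by measurable

lemma k_core:
  assumes T: "T \<ge> 0"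
  shows "(k_fun \<alpha> H has_integral (cd \<alpha> H 0 - cd \<alpha> H T + \<alpha>^2 * (C1 \<alpha> H T - C1 \<alpha> H 0))) {0..T}"
proof -
  define F where "F x = - cd \<alpha> H x + \<alpha>^2 * C1 \<alpha> H x" for x
  have "(k_fun \<alpha> H has_integral (F T - F 0)) {0..T}"
  proof (rule fundamental_theorem_of_calculus_interior[OF T])
    show "continuous_on {0..T} F"
      unfolding F_def[abs_def]
      by (intro continuous_intros continuous_on_subset[OF cont_cd[OF H1 H2 al]] C1_cont[OF H1 H2 al]) auto
    fix x assume x: "x \<in> {0<..<T}"
    have d1: "(C1 \<alpha> H has_real_derivative c0 \<alpha> H x) (at x)" using x by (intro d_C1[OF H1 H2 al]) auto
    have d4: "(cd \<alpha> H has_real_derivative (\<alpha>^2 * c0 \<alpha> H x - k_fun \<alpha> H x)) (at x)"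
      using x by (intro cd_deriv[OF H1 H2 al]) auto
    have "(F has_real_derivative k_fun \<alpha> H x) (at x)"
      unfolding F_def[abs_def]
      apply (rule derivative_eq_intros refl d1 d4)+
      by (simp add: algebra_simps)
    then show "(F has_vector_derivative k_fun \<alpha> H x) (at x)"
      by (simp add: has_real_derivative_iff_has_vector_derivative[symmetric])
  qed
  then show ?thesis unfolding F_def by (simp add: algebra_simps)
qed

lemma k_int_Icc: "T \<ge> 0 \<Longrightarrow> set_integrable lborel {0..T} (k_fun \<alpha> H)"
  by (rule hk_lborel(1)[OF k_core]) (use k_nonneg k_meas in auto)

lemma k_tail:
  assumes x: "x \<ge> 1"
  shows "k_fun \<alpha> H x \<le> (C_const \<alpha> H * (1 - exp (- \<alpha> / H)) powr (2 * H - 2)) * exp (- (x * (\<alpha> * (1 - H) / H)))"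
proof -
  have Hp: "H > 0" using H1 by auto
  have e1: "exp (- \<alpha> * x / H) \<le> exp (- \<alpha> / H)"
    using x al Hp by (auto simp: divide_simps)
  have e2: "exp (- \<alpha> / H) < 1" using al Hp by auto
  have ab: "\<bar>1 - exp (- \<alpha> * x / H)\<bar> = 1 - exp (- \<alpha> * x / H)"
    using e1 e2 by auto
  have pm: "\<bar>1 - exp (- \<alpha> * x / H)\<bar> powr (2 * H - 2) \<le> (1 - exp (- \<alpha> / H)) powr (2 * H - 2)"
    unfolding ab by (rule powr_mono2') (use H2 e1 e2 in auto)
  have ee: "exp (- \<alpha> * (1 - H) * x / H) = exp (- (x * (\<alpha> * (1 - H) / H)))"
    using Hp by (simp add: field_simps)
  show ?thesis unfolding k_fun_def ee
    using mult_left_mono[OF pm, of "C_const \<alpha> H * exp (- (x * (\<alpha> * (1 - H) / H)))"] C_nonneg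
    by (simp add: algebra_simps)
qed

lemma k_int: "set_integrable lborel {0<..} (k_fun \<alpha> H)"
proof -
  have A: "set_integrable lborel {0<..1} (k_fun \<alpha> H)"
    by (rule set_integrable_subset[OF k_int_Icc[of 1]]) auto
  have g: "\<alpha> * (1 - H) / H > 0" using H1 H2 al by auto
  have "set_integrable lborel {0<..} (\<lambda>x. exp (- (x * (\<alpha> * (1 - H) / H))))"
    by (rule integrable_I0i_exp_mscale[OF g])
  then have "set_integrable lborel {1<..} (\<lambda>x. exp (- (x * (\<alpha> * (1 - H) / H))))"
    by (rule set_integrable_subset) auto
  then have B0: "set_integrable lborel {1<..}
     (\<lambda>x. (C_const \<alpha> H * (1 - exp (- \<alpha> / H)) powr (2 * H - 2)) * exp (- (x * (\<alpha> * (1 - H) / H))))"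
    by (rule set_integrable_mult_right)
  have B: "set_integrable lborel {1<..} (k_fun \<alpha> H)"
  proof (rule set_integrable_bound[OF B0])
    show "set_borel_measurable lborel {1<..} (k_fun \<alpha> H)"
      unfolding set_borel_measurable_def using k_meas by measurable
    show "AE x in lborel. x \<in> {1<..} \<longrightarrow> norm (k_fun \<alpha> H x) \<le>
       norm ((C_const \<alpha> H * (1 - exp (- \<alpha> / H)) powr (2 * H - 2)) * exp (- (x * (\<alpha> * (1 - H) / H))))"
    proof (rule AE_I2, rule impI)
      fix x :: real assume "x \<in> {1<..}"
      then have "k_fun \<alpha> H x \<le> (C_const \<alpha> H * (1 - exp (- \<alpha> / H)) powr (2 * H - 2)) * exp (- (x * (\<alpha> * (1 - H) / H)))"
        by (intro k_tail) auto
      then show "norm (k_fun \<alpha> H x) \<le>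
       norm ((C_const \<alpha> H * (1 - exp (- \<alpha> / H)) powr (2 * H - 2)) * exp (- (x * (\<alpha> * (1 - H) / H))))"
        using k_nonneg[of x] by simp
    qed
  qed
  have "{0<..} = {0<..1} \<union> ({1<..} :: real set)" by auto
  then show ?thesis using set_integrable_Un[OF A B] by simp
qed

end


definition GG :: "real \<Rightarrow> real \<Rightarrow> real \<Rightarrow> real" where
  "GG \<alpha> H T = (LBINT x:{0..T}. (T - x) * k_fun \<alpha> H x)"

context
  fixes \<alpha> H :: real
  assumes H1: "1/2 < H" and H2: "H < 1" and al: "\<alpha> > 0"
begin

lemma G_int: "T \<ge> 0 \<Longrightarrow> set_integrable lborel {0..T} (\<lambda>x. (T - x) * k_fun \<alpha> H x)"
  by (rule hk_lborel(1)[OF core_integral[OF H1 H2 al]])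
     (use k_nonneg[OF H1 H2 al] k_meas[OF H1 H2 al] in \<open>auto intro!: mult_nonneg_nonneg\<close>)

lemma G_eq: "T \<ge> 0 \<Longrightarrow> GG \<alpha> H T = c0 \<alpha> H 0 - c0 \<alpha> H T + \<alpha>^2 * (C2 \<alpha> H T - C2 \<alpha> H 0 - T * C1 \<alpha> H 0)"
  unfolding GG_def
  by (rule hk_lborel(2)[OF core_integral[OF H1 H2 al]])
     (use k_nonneg[OF H1 H2 al] k_meas[OF H1 H2 al] in \<open>auto intro!: mult_nonneg_nonneg\<close>)

lemma G_bound:
  assumes t: "t \<ge> 0"
  shows "GG \<alpha> H t \<le> t * (LBINT x:{0<..}. k_fun \<alpha> H x)"
proof -
  have i1: "integrable lborel (\<lambda>x. indicator {0..t} x * ((t - x) * k_fun \<alpha> H x))"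
    using G_int[OF t] unfolding set_integrable_def by simp
  have i2: "integrable lborel (\<lambda>x. indicator {0<..} x * (t * k_fun \<alpha> H x))"
    using k_int[OF H1 H2 al] unfolding set_integrable_def
    by (auto dest: integrable_mult_right[where c=t] simp: algebra_simps)
  have "GG \<alpha> H t = (\<integral>x. indicator {0..t} x * ((t - x) * k_fun \<alpha> H x) \<partial>lborel)"
    unfolding GG_def set_lebesgue_integral_def by simp
  also have "\<dots> \<le> (\<integral>x. indicator {0<..} x * (t * k_fun \<alpha> H x) \<partial>lborel)"
  proof (rule integral_mono[OF i1 i2])
    fix x :: real
    show "indicator {0..t} x * ((t - x) * k_fun \<alpha> H x) \<le> indicator {0<..} x * (t * k_fun \<alpha> H x)"
      using k_nonneg[OF H1 H2 al, of x] k_zero[OF H1 H2 al] t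
      by (cases "x = 0") (auto simp: indicator_def mult_right_mono)
  qed
  also have "\<dots> = t * (LBINT x:{0<..}. k_fun \<alpha> H x)"
    unfolding set_lebesgue_integral_def by (simp add: algebra_simps)
  finally show ?thesis .
qed

lemma G_lim:
  assumes s: "s \<ge> 0"
  shows "((\<lambda>t. GG \<alpha> H t - GG \<alpha> H (t - s)) \<longlongrightarrow> s * (LBINT x:{0<..}. k_fun \<alpha> H x)) at_top"
proof -
  define \<phi> where "\<phi> t x = indicator {0..t} x * ((t - x) * k_fun \<alpha> H x)
      - indicator {0..t - s} x * ((t - s - x) * k_fun \<alpha> H x)" for t x :: real
  define f where "f x = indicator {0<..} x * (s * k_fun \<alpha> H x)" for x :: real
  have km[measurable]: "k_fun \<alpha> H \<in> borel_measurable borel" by (rule k_meas[OF H1 H2 al])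
  have fi: "integrable lborel f"
    using k_int[OF H1 H2 al] unfolding set_integrable_def f_def
    by (auto dest: integrable_mult_right[where c=s] simp: algebra_simps)
  have eqv: "GG \<alpha> H t - GG \<alpha> H (t - s) = integral\<^sup>L lborel (\<phi> t)" if t: "t \<ge> s" for t
  proof -
    have i1: "integrable lborel (\<lambda>x. indicator {0..t} x * ((t - x) * k_fun \<alpha> H x))"
      using G_int[of t] t s unfolding set_integrable_def by simp
    have i2: "integrable lborel (\<lambda>x. indicator {0..t - s} x * ((t - s - x) * k_fun \<alpha> H x))"
      using G_int[of "t - s"] t s unfolding set_integrable_def by simp
    show ?thesis unfolding \<phi>_def GG_def set_lebesgue_integral_def
      using Bochner_Integration.integral_diff[OF i1 i2] by simp
  qed
  have lim: "((\<lambda>t. integral\<^sup>L lborel (\<phi> t)) \<longlongrightarrow> integral\<^sup>L lborel f) at_top"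
  proof (rule integral_dominated_convergence_at_top[where w=f])
    show "f \<in> borel_measurable lborel" unfolding f_def by measurable
    show "\<phi> t \<in> borel_measurable lborel" for t unfolding \<phi>_def by measurable
    show "integrable lborel f" by (rule fi)
    show "AE x in lborel. ((\<lambda>t. \<phi> t x) \<longlongrightarrow> f x) at_top"
    proof (rule AE_I2)
      fix x :: real
      have "eventually (\<lambda>t. \<phi> t x = f x) at_top"
      proof (cases "x > 0")
        case True
        have "eventually (\<lambda>t. t \<ge> x + s) at_top" by (rule eventually_ge_at_top)
        then show ?thesis
          by eventually_elim (use True s in \<open>auto simp: \<phi>_def f_def indicator_def algebra_simps\<close>)
      next
        case False
        then show ?thesis
          using k_zero[OF H1 H2 al] by (cases "x = 0") (auto simp: \<phi>_def f_def indicator_def)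
      qed
      then show "((\<lambda>t. \<phi> t x) \<longlongrightarrow> f x) at_top" by (rule tendsto_eventually)
    qed
    have "eventually (\<lambda>t. t \<ge> s) at_top" by (rule eventually_ge_at_top)
    then show "\<forall>\<^sub>F t in at_top. AE x in lborel. norm (\<phi> t x) \<le> f x"
    proof eventually_elim
      case (elim t)
      show ?case
      proof (rule AE_I2)
        fix x :: real
        have k0: "k_fun \<alpha> H x \<ge> 0" by (rule k_nonneg[OF H1 H2 al])
        consider "x < 0" | "x = 0" | "0 < x" "x \<le> t - s" | "t - s < x" "x \<le> t" | "t < x" by linarith
        then show "norm (\<phi> t x) \<le> f x"
        proof cases
          case 1 then show ?thesis by (simp add: \<phi>_def f_def)
        next
          case 2 then show ?thesis using k_zero[OF H1 H2 al] by (simp add: \<phi>_def f_def)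
        next
          case 3 then show ?thesis using k0 s by (simp add: \<phi>_def f_def algebra_simps)
        next
          case 4
          then have "\<phi> t x = (t - x) * k_fun \<alpha> H x" using elim s by (simp add: \<phi>_def)
          moreover have "(t - x) * k_fun \<alpha> H x \<le> s * k_fun \<alpha> H x"
            using 4 k0 by (intro mult_right_mono) auto
          moreover have "0 \<le> (t - x) * k_fun \<alpha> H x" using 4 k0 by auto
          ultimately show ?thesis using 4 elim s by (simp add: f_def)
        next
          case 5 then show ?thesis using k0 s elim by (simp add: \<phi>_def f_def)
        qed
      qed
    qed
  qed
  have fv: "integral\<^sup>L lborel f = s * (LBINT x:{0<..}. k_fun \<alpha> H x)"
    unfolding f_def set_lebesgue_integral_def by (simp add: algebra_simps)
  have "eventually (\<lambda>t. integral\<^sup>L lborel (\<phi> t) = GG \<alpha> H t - GG \<alpha> H (t - s)) at_top"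
    using eventually_ge_at_top[of s] by eventually_elim (use eqv in auto)
  from tendsto_cong[OF this] lim show ?thesis unfolding fv by simp
qed

end


locale fbm_ctx =
  fixes M :: "'a measure" and H \<alpha> :: real and Z :: "real \<Rightarrow> 'a \<Rightarrow> real"
  assumes H1: "1/2 < H" and H2: "H < 1" and fbm: "fBm M H Z"
    and cont: "\<forall>\<omega>\<in>space M. continuous_on {0..} (\<lambda>t. Z t \<omega>)" and al: "\<alpha> > 0"
begin

sublocale prob_space M using fbm unfolding fBm_def by auto

definition aa :: "real \<Rightarrow> real" where "aa u = H * exp (\<alpha> * u / H) / \<alpha>"
definition U :: "real \<Rightarrow> 'a \<Rightarrow> real" where "U u \<omega> = exp (- \<alpha> * u) * Z (aa u) \<omega>"

lemma Hpos: "H > 0" using H1 by auto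

lemma aa_pos: "aa u > 0" unfolding aa_def using Hpos al by auto

lemma Z_meas[measurable]: "r \<ge> 0 \<Longrightarrow> Z r \<in> borel_measurable M"
proof -
  assume r: "r \<ge> 0"
  have "centered_gaussian_rv M (\<lambda>\<omega>. \<Sum>t\<in>{r}. (\<lambda>_. 1) t * Z t \<omega>)"
    using fbm[unfolded fBm_def, THEN conjunct2, THEN conjunct1, rule_format, of "{r}" "\<lambda>_. 1"] r by simp
  then show ?thesis unfolding centered_gaussian_rv_def by simp
qed

lemma Z_cov: "r \<ge> 0 \<Longrightarrow> r' \<ge> 0 \<Longrightarrow> integral\<^sup>L M (\<lambda>\<omega>. Z r \<omega> * Z r' \<omega>)
   = (r powr (2*H) + r' powr (2*H) - \<bar>r - r'\<bar> powr (2*H)) / 2"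
  using fbm[unfolded fBm_def, THEN conjunct2, THEN conjunct2, rule_format, of r r'] by simp

lemma Z_sq_int: "r > 0 \<Longrightarrow> integrable M (\<lambda>\<omega>. Z r \<omega> * Z r \<omega>)"
proof (rule ccontr)
  assume r: "r > 0" and ni: "\<not> integrable M (\<lambda>\<omega>. Z r \<omega> * Z r \<omega>)"
  have "integral\<^sup>L M (\<lambda>\<omega>. Z r \<omega> * Z r \<omega>) = 0" by (rule not_integrable_integral_eq[OF ni])
  moreover have "integral\<^sup>L M (\<lambda>\<omega>. Z r \<omega> * Z r \<omega>) = r powr (2*H)"
    using Z_cov[of r r] r by simp
  moreover have "r powr (2*H) > 0" using r by simp
  ultimately show False by simp
qed

lemma prod_int_bound:
  fixes X Y :: "'a \<Rightarrow> real"
  assumes X[measurable]: "X \<in> borel_measurable M" and Y[measurable]: "Y \<in> borel_measurable M"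
    and iX: "integrable M (\<lambda>\<omega>. X \<omega> * X \<omega>)" and iY: "integrable M (\<lambda>\<omega>. Y \<omega> * Y \<omega>)"
  shows "integrable M (\<lambda>\<omega>. X \<omega> * Y \<omega>)"
    and "integral\<^sup>L M (\<lambda>\<omega>. \<bar>X \<omega> * Y \<omega>\<bar>) \<le> integral\<^sup>L M (\<lambda>\<omega>. X \<omega> * X \<omega>) + integral\<^sup>L M (\<lambda>\<omega>. Y \<omega> * Y \<omega>)"
proof -
  have b: "\<bar>x * y\<bar> \<le> x * x + y * y" for x y :: real
  proof -
    have "0 \<le> (\<bar>x\<bar> - \<bar>y\<bar>) * (\<bar>x\<bar> - \<bar>y\<bar>)" by simp
    then have "2 * (\<bar>x\<bar> * \<bar>y\<bar>) \<le> \<bar>x\<bar> * \<bar>x\<bar> + \<bar>y\<bar> * \<bar>y\<bar>" by (simp add: algebra_simps)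
    moreover have "\<bar>x\<bar> * \<bar>x\<bar> = x * x" "\<bar>y\<bar> * \<bar>y\<bar> = y * y" by (simp_all add: abs_mult_self_eq)
    moreover have "0 \<le> \<bar>x\<bar> * \<bar>y\<bar>" by simp
    ultimately show ?thesis using abs_mult[of x y] by linarith
  qed
  have s: "integrable M (\<lambda>\<omega>. X \<omega> * X \<omega> + Y \<omega> * Y \<omega>)" using iX iY by simp
  show i: "integrable M (\<lambda>\<omega>. X \<omega> * Y \<omega>)"
    using s by (rule Bochner_Integration.integrable_bound) (use b in \<open>auto intro!: AE_I2\<close>)
  have "integral\<^sup>L M (\<lambda>\<omega>. \<bar>X \<omega> * Y \<omega>\<bar>) \<le> integral\<^sup>L M (\<lambda>\<omega>. X \<omega> * X \<omega> + Y \<omega> * Y \<omega>)"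
    by (rule integral_mono[OF integrable_abs[OF i] s]) (use b in auto)
  then show "integral\<^sup>L M (\<lambda>\<omega>. \<bar>X \<omega> * Y \<omega>\<bar>) \<le> integral\<^sup>L M (\<lambda>\<omega>. X \<omega> * X \<omega>) + integral\<^sup>L M (\<lambda>\<omega>. Y \<omega> * Y \<omega>)"
    using iX iY by simp
qed

lemma U_meas[measurable]: "U u \<in> borel_measurable M"
  unfolding U_def[abs_def] using aa_pos[of u] by (simp add: less_imp_le)

lemma U_sq_int: "integrable M (\<lambda>\<omega>. U u \<omega> * U u \<omega>)"
proof -
  have "integrable M (\<lambda>\<omega>. (exp (- \<alpha> * u) * exp (- \<alpha> * u)) * (Z (aa u) \<omega> * Z (aa u) \<omega>))"
    using Z_sq_int[OF aa_pos[of u]] by simp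
  then show ?thesis unfolding U_def by (simp add: algebra_simps)
qed

lemma U_prod_int: "integrable M (\<lambda>\<omega>. U u \<omega> * U v \<omega>)"
  by (rule prod_int_bound(1)[OF U_meas U_meas U_sq_int U_sq_int])

lemma cov_alg:
  assumes vu: "v \<le> u"
  shows "exp (- \<alpha> * u) * exp (- \<alpha> * v) * (((aa u) powr (2*H) + (aa v) powr (2*H) - \<bar>aa u - aa v\<bar> powr (2*H)) / 2)
     = c0 \<alpha> H (u - v)"
proof -
  define K where "K = (H / \<alpha>) powr (2 * H)"
  have hp: "H / \<alpha> > 0" using Hpos al by auto
  have pa: "(aa w) powr (2*H) = K * exp (2 * \<alpha> * w)" for w
  proof -
    have "(aa w) powr (2*H) = ((H / \<alpha>) * exp (\<alpha> * w / H)) powr (2*H)" unfolding aa_def by simp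
    then have "(aa w) powr (2*H) = K * exp (\<alpha> * w / H) powr (2 * H)"
      unfolding K_def powr_mult .
    also have "exp (\<alpha> * w / H) powr (2 * H) = exp (2 * \<alpha> * w)"
      unfolding exp_powr_real using Hpos by (simp add: field_simps)
    finally show ?thesis .
  qed
  have qd: "qq \<alpha> H (u - v) \<ge> 0" unfolding qq_def using vu al Hpos by (auto simp: field_simps)
  have ediff: "aa u - aa v = (H / \<alpha>) * exp (\<alpha> * u / H) * qq \<alpha> H (u - v)"
  proof -
    have "exp (\<alpha> * u / H) * exp (- \<alpha> * (u - v) / H) = exp (\<alpha> * v / H)"
      unfolding exp_add[symmetric] using Hpos by (simp add: field_simps)
    then show ?thesis unfolding aa_def qq_def by (simp add: algebra_simps)
  qed
  have pd: "\<bar>aa u - aa v\<bar> powr (2*H) = K * exp (2 * \<alpha> * u) * \<bar>qq \<alpha> H (u - v)\<bar> powr (2 * H)"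
  proof -
    have "\<bar>aa u - aa v\<bar> = (H / \<alpha>) * exp (\<alpha> * u / H) * \<bar>qq \<alpha> H (u - v)\<bar>"
      unfolding ediff using hp qd Hpos al by (simp add: abs_mult)
    then have "\<bar>aa u - aa v\<bar> powr (2*H) = ((H / \<alpha>) * exp (\<alpha> * u / H) * \<bar>qq \<alpha> H (u - v)\<bar>) powr (2 * H)"
      by simp
    also have "\<dots> = K * exp (\<alpha> * u / H) powr (2 * H) * \<bar>qq \<alpha> H (u - v)\<bar> powr (2 * H)"
      unfolding K_def powr_mult ..
    also have "exp (\<alpha> * u / H) powr (2 * H) = exp (2 * \<alpha> * u)"
      unfolding exp_powr_real using Hpos by (simp add: field_simps)
    finally show ?thesis .
  qed
  have e1: "exp (- \<alpha> * u) * exp (- \<alpha> * v) * exp (2 * \<alpha> * u) = exp (\<alpha> * (u - v))"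
    unfolding exp_add[symmetric] by (simp add: algebra_simps)
  have e2: "exp (- \<alpha> * u) * exp (- \<alpha> * v) * exp (2 * \<alpha> * v) = exp (- \<alpha> * (u - v))"
    unfolding exp_add[symmetric] by (simp add: algebra_simps)
  have "exp (- \<alpha> * u) * exp (- \<alpha> * v) * (((aa u) powr (2*H) + (aa v) powr (2*H) - \<bar>aa u - aa v\<bar> powr (2*H)) / 2)
     = K / 2 * ((exp (- \<alpha> * u) * exp (- \<alpha> * v) * exp (2 * \<alpha> * u)) + (exp (- \<alpha> * u) * exp (- \<alpha> * v) * exp (2 * \<alpha> * v))
        - (exp (- \<alpha> * u) * exp (- \<alpha> * v) * exp (2 * \<alpha> * u)) * \<bar>qq \<alpha> H (u - v)\<bar> powr (2 * H))"
    unfolding pa pd by (simp add: field_simps)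
  also have "\<dots> = c0 \<alpha> H (u - v)"
    unfolding e1 e2 c0_def KK_def K_def by simp
  finally show ?thesis .
qed

lemma U_cov: "integral\<^sup>L M (\<lambda>\<omega>. U u \<omega> * U v \<omega>) = c0 \<alpha> H \<bar>u - v\<bar>"
proof -
  have "integral\<^sup>L M (\<lambda>\<omega>. U u \<omega> * U v \<omega>) = exp (- \<alpha> * u) * exp (- \<alpha> * v) * integral\<^sup>L M (\<lambda>\<omega>. Z (aa u) \<omega> * Z (aa v) \<omega>)"
    unfolding U_def by (simp add: algebra_simps)
  also have "\<dots> = exp (- \<alpha> * u) * exp (- \<alpha> * v) * (((aa u) powr (2*H) + (aa v) powr (2*H) - \<bar>aa u - aa v\<bar> powr (2*H)) / 2)"
    using Z_cov[of "aa u" "aa v"] aa_pos[of u] aa_pos[of v] by simp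
  also have "\<dots> = c0 \<alpha> H \<bar>u - v\<bar>"
  proof (cases "v \<le> u")
    case True then show ?thesis using cov_alg[OF True] by simp
  next
    case False
    then have "u \<le> v" by simp
    from cov_alg[OF this] False show ?thesis by (simp add: algebra_simps abs_minus_commute)
  qed
  finally show ?thesis .
qed

end


lemma floor_approx: "(\<lambda>n. real_of_int \<lfloor>real (Suc n) * u\<rfloor> / real (Suc n)) \<longlonglongrightarrow> u"
proof (rule real_tendsto_sandwich[where f="\<lambda>n. u - 1 / real (Suc n)" and h="\<lambda>n. u"])
  show "\<forall>\<^sub>F n in sequentially. u - 1 / real (Suc n) \<le> real_of_int \<lfloor>real (Suc n) * u\<rfloor> / real (Suc n)"
  proof (rule always_eventually, rule allI)
    fix n
    have le: "real (Suc n) * u - 1 \<le> real_of_int \<lfloor>real (Suc n) * u\<rfloor>" by linarith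
    have "u - 1 / real (Suc n) = (real (Suc n) * u - 1) / real (Suc n)" by (simp add: field_simps)
    also have "\<dots> \<le> real_of_int \<lfloor>real (Suc n) * u\<rfloor> / real (Suc n)"
      by (rule divide_right_mono[OF le]) simp
    finally show "u - 1 / real (Suc n) \<le> real_of_int \<lfloor>real (Suc n) * u\<rfloor> / real (Suc n)" .
  qed
  show "\<forall>\<^sub>F n in sequentially. real_of_int \<lfloor>real (Suc n) * u\<rfloor> / real (Suc n) \<le> u"
  proof (rule always_eventually, rule allI)
    fix n
    have le: "real_of_int \<lfloor>real (Suc n) * u\<rfloor> \<le> real (Suc n) * u" by linarith
    have "real_of_int \<lfloor>real (Suc n) * u\<rfloor> / real (Suc n) \<le> (real (Suc n) * u) / real (Suc n)"
      by (rule divide_right_mono[OF le]) simp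
    then show "real_of_int \<lfloor>real (Suc n) * u\<rfloor> / real (Suc n) \<le> u" by simp
  qed
  have "(\<lambda>n. 1 / real (Suc n)) \<longlonglongrightarrow> 0" by (rule LIMSEQ_Suc[OF lim_const_over_n])
  then show "(\<lambda>n. u - 1 / real (Suc n)) \<longlonglongrightarrow> u"
    using tendsto_diff[OF tendsto_const[of u]] by fastforce
qed simp

context fbm_ctx
begin

lemma Zaa_isCont: "\<omega> \<in> space M \<Longrightarrow> isCont (\<lambda>u. Z (aa u) \<omega>) u"
proof -
  assume w: "\<omega> \<in> space M"
  have c: "continuous_on {0..} (\<lambda>t. Z t \<omega>)" using cont w by auto
  have "isCont (\<lambda>t. Z t \<omega>) (aa u)"
    by (rule continuous_on_interior[OF c]) (use aa_pos[of u] in auto)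
  moreover have "isCont aa u" unfolding aa_def[abs_def] using Hpos al by (intro continuous_intros) auto
  ultimately show ?thesis using isCont_o2 by blast
qed

lemma U_isCont: "\<omega> \<in> space M \<Longrightarrow> isCont (\<lambda>u. U u \<omega>) u"
  unfolding U_def using Zaa_isCont by (intro continuous_intros) auto

lemma U_cont_on: "\<omega> \<in> space M \<Longrightarrow> continuous_on S (\<lambda>u. U u \<omega>)"
  using U_isCont continuous_at_imp_continuous_on by blast

lemma U_joint[measurable]: "(\<lambda>p. U (fst p) (snd p)) \<in> borel_measurable (lborel \<Otimes>\<^sub>M M)"
proof -
  define W where "W n p = Z (aa (real_of_int \<lfloor>real (Suc n) * fst p\<rfloor> / real (Suc n))) (snd p)" for n p
  have Wm: "W n \<in> borel_measurable (lborel \<Otimes>\<^sub>M M)" for n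
  proof -
    have f_m: "(\<lambda>p. Z (aa (real_of_int i / real (Suc n))) (snd p)) \<in> borel_measurable (lborel \<Otimes>\<^sub>M M)"
      if "i \<in> UNIV" for i :: int
      using aa_pos[of "real_of_int i / real (Suc n)"] by (intro measurable_compose[OF measurable_snd Z_meas]) auto
    have g_m: "(\<lambda>p. \<lfloor>real (Suc n) * fst p\<rfloor>) \<in> measurable (lborel \<Otimes>\<^sub>M M) (count_space UNIV)"
      by measurable
    have "(\<lambda>p. Z (aa (real_of_int \<lfloor>real (Suc n) * fst p\<rfloor> / real (Suc n))) (snd p)) \<in> borel_measurable (lborel \<Otimes>\<^sub>M M)"
      by (rule measurable_compose_countable'[OF f_m g_m]) (simp_all add: countableI_type)
    then show ?thesis unfolding W_def by simp
  qed
  have "(\<lambda>p. Z (aa (fst p)) (snd p)) \<in> borel_measurable (lborel \<Otimes>\<^sub>M M)"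
  proof (rule borel_measurable_LIMSEQ_real[OF _ Wm])
    fix p :: "real \<times> 'a" assume p: "p \<in> space (lborel \<Otimes>\<^sub>M M)"
    then have w: "snd p \<in> space M" by (auto simp: space_pair_measure)
    show "(\<lambda>n. W n p) \<longlonglongrightarrow> Z (aa (fst p)) (snd p)"
      unfolding W_def using isCont_tendsto_compose[OF Zaa_isCont[OF w] floor_approx] .
  qed
  then show ?thesis unfolding U_def by measurable
qed

lemma sf_lborel_M: "pair_sigma_finite lborel M"
  by (intro pair_sigma_finite.intro lborel.sigma_finite_measure_axioms sigma_finite_measure_axioms)

lemma fubini_set:
  fixes P :: "real \<Rightarrow> 'a \<Rightarrow> real"
  assumes Pm: "(\<lambda>p. P (fst p) (snd p)) \<in> borel_measurable (lborel \<Otimes>\<^sub>M M)"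
    and Pi: "\<And>u. u \<in> {s..t} \<Longrightarrow> integrable M (P u)"
    and Pb: "\<And>u. u \<in> {s..t} \<Longrightarrow> integral\<^sup>L M (\<lambda>\<omega>. \<bar>P u \<omega>\<bar>) \<le> B"
  shows "integrable M (\<lambda>\<omega>. LBINT u:{s..t}. P u \<omega>)"
    and "integral\<^sup>L M (\<lambda>\<omega>. LBINT u:{s..t}. P u \<omega>) = (LBINT u:{s..t}. integral\<^sup>L M (P u))"
proof -
  interpret L: pair_sigma_finite lborel M by (rule sf_lborel_M)
  define f where "f u \<omega> = indicator {s..t} u * P u \<omega>" for u \<omega>
  have fm[measurable]: "(\<lambda>(u, \<omega>). f u \<omega>) \<in> borel_measurable (lborel \<Otimes>\<^sub>M M)"
  proof -
    have "(\<lambda>p. indicator {s..t} (fst p) * P (fst p) (snd p)) \<in> borel_measurable (lborel \<Otimes>\<^sub>M M)"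
      using Pm by measurable
    then show ?thesis unfolding f_def by (simp add: case_prod_beta)
  qed
  have ci: "integrable lborel (\<lambda>u. indicator {s..t} u * B)"
  proof -
    have "set_integrable lborel {s..t} (\<lambda>_. B)"
      by (rule borel_integrable_atLeastAtMost') simp
    then show ?thesis unfolding set_integrable_def by simp
  qed
  have int: "integrable (lborel \<Otimes>\<^sub>M M) (\<lambda>(u, \<omega>). f u \<omega>)"
  proof (rule L.Fubini_integrable)
    show "(\<lambda>(u, \<omega>). f u \<omega>) \<in> borel_measurable (lborel \<Otimes>\<^sub>M M)" by (rule fm)
    have m1: "(\<lambda>u. \<integral>\<omega>. norm ((\<lambda>(u, \<omega>). f u \<omega>) (u, \<omega>)) \<partial>M) \<in> borel_measurable lborel"
      by measurable
    show "integrable lborel (\<lambda>u. \<integral>\<omega>. norm ((\<lambda>(u, \<omega>). f u \<omega>) (u, \<omega>)) \<partial>M)"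
    proof (rule Bochner_Integration.integrable_bound[OF ci m1], rule AE_I2)
      fix u :: real
      show "norm (\<integral>\<omega>. norm ((\<lambda>(u, \<omega>). f u \<omega>) (u, \<omega>)) \<partial>M) \<le> norm (indicator {s..t} u * B)"
      proof (cases "u \<in> {s..t}")
        case True
        have "(\<integral>\<omega>. norm ((\<lambda>(u, \<omega>). f u \<omega>) (u, \<omega>)) \<partial>M) = integral\<^sup>L M (\<lambda>\<omega>. \<bar>P u \<omega>\<bar>)"
          using True by (simp add: f_def)
        moreover have "0 \<le> integral\<^sup>L M (\<lambda>\<omega>. \<bar>P u \<omega>\<bar>)" by simp
        ultimately show ?thesis using Pb[OF True] True by simp
      next
        case False then show ?thesis by (simp add: f_def)
      qed
    qed
    show "AE u in lborel. integrable M (\<lambda>\<omega>. (\<lambda>(u, \<omega>). f u \<omega>) (u, \<omega>))"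
    proof (rule AE_I2)
      fix u :: real
      show "integrable M (\<lambda>\<omega>. (\<lambda>(u, \<omega>). f u \<omega>) (u, \<omega>))"
        using Pi[of u] by (cases "u \<in> {s..t}") (auto simp: f_def)
    qed
  qed
  have e1: "(\<integral>u. f u \<omega> \<partial>lborel) = (LBINT u:{s..t}. P u \<omega>)" for \<omega>
    unfolding f_def set_lebesgue_integral_def by simp
  have e2: "(\<integral>\<omega>. f u \<omega> \<partial>M) = indicator {s..t} u * integral\<^sup>L M (P u)" for u
    unfolding f_def by simp
  show "integrable M (\<lambda>\<omega>. LBINT u:{s..t}. P u \<omega>)"
    using L.integrable_snd[OF int] unfolding e1 .
  show "integral\<^sup>L M (\<lambda>\<omega>. LBINT u:{s..t}. P u \<omega>) = (LBINT u:{s..t}. integral\<^sup>L M (P u))"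
    using L.Fubini_integral[OF int] unfolding e1 e2 set_lebesgue_integral_def by simp
qed

end


lemma cs_hk:
  fixes f :: "real \<Rightarrow> real"
  assumes st: "s \<le> t" and cf: "continuous_on {s..t} f"
  shows "(integral {s..t} f)^2 \<le> (t - s) * integral {s..t} (\<lambda>u. (f u)^2)"
proof (cases "s = t")
  case True then show ?thesis by simp
next
  case False
  then have L: "t - s > 0" using st by simp
  define A where "A = integral {s..t} f"
  define B where "B = integral {s..t} (\<lambda>u. (f u)^2)"
  have if1: "f integrable_on {s..t}" by (rule integrable_continuous_real[OF cf])
  have if2: "(\<lambda>u. (f u)^2) integrable_on {s..t}"
    by (rule integrable_continuous_real) (intro continuous_intros cf)
  have i1: "(\<lambda>u. (t - s)^2 * (f u)^2) integrable_on {s..t}" using integrable_on_cmult_left[OF if2, of "(t - s)^2"] by simp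
  have i2: "(\<lambda>u. (2 * (t - s) * A) * f u) integrable_on {s..t}" using integrable_on_cmult_left[OF if1, of "2 * (t - s) * A"] by simp
  have i3: "(\<lambda>u. A^2) integrable_on {s..t}" by (rule integrable_continuous_real) (rule continuous_on_const)
  have "0 \<le> integral {s..t} (\<lambda>u. ((t - s) * f u - A)^2)"
    by (rule integral_nonneg) (auto intro!: integrable_continuous_real continuous_intros cf)
  also have "integral {s..t} (\<lambda>u. ((t - s) * f u - A)^2)
      = integral {s..t} (\<lambda>u. ((t - s)^2 * (f u)^2 - (2 * (t - s) * A) * f u) + A^2)"
    by (rule integral_cong) (simp add: power2_eq_square algebra_simps)
  also have "\<dots> = (t - s)^2 * B - (2 * (t - s) * A) * A + (t - s) * A^2"
    using integral_add[OF integrable_diff[OF i1 i2] i3] integral_diff[OF i1 i2] st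
    unfolding A_def B_def by simp
  finally have "0 \<le> (t - s) * ((t - s) * B - A^2)" by (simp add: power2_eq_square algebra_simps)
  then have "0 \<le> (t - s) * B - A^2" using L by (simp add: zero_le_mult_iff)
  then show ?thesis unfolding A_def B_def by simp
qed

lemma cs_lb:
  fixes f :: "real \<Rightarrow> real"
  assumes st: "s \<le> t" and cf: "continuous_on {s..t} f"
  shows "(LBINT u:{s..t}. f u)^2 \<le> (t - s) * (LBINT u:{s..t}. (f u)^2)"
proof -
  have c2: "continuous_on {s..t} (\<lambda>u. (f u)^2)" by (intro continuous_intros cf)
  show ?thesis
    using cs_hk[OF st cf]
    unfolding set_borel_integral_eq_integral(2)[OF borel_integrable_atLeastAtMost'[OF cf]]
      set_borel_integral_eq_integral(2)[OF borel_integrable_atLeastAtMost'[OF c2]] .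
qed

locale fbm_Y = fbm_ctx +
  fixes Y :: "real \<Rightarrow> 'a \<Rightarrow> real"
  assumes Y_def: "\<forall>t \<omega>. Y t \<omega> =
        RS_integral (\<lambda>s. exp (- \<alpha> * s)) (\<lambda>s. Z (H * exp (\<alpha> * s / H) / \<alpha>) \<omega>) 0 t"
begin

lemma Y_repr:
  assumes w: "\<omega> \<in> space M" and t: "0 \<le> t"
  shows "Y t \<omega> = U t \<omega> - U 0 \<omega> + \<alpha> * integral {0..t} (\<lambda>u. U u \<omega>)"
proof -
  have g: "(\<lambda>s. Z (H * exp (\<alpha> * s / H) / \<alpha>) \<omega>) = (\<lambda>s. Z (aa s) \<omega>)" unfolding aa_def ..
  have RS: "has_RS_integral (\<lambda>s. exp (- \<alpha> * s)) (\<lambda>s. Z (aa s) \<omega>) 0 t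
     (exp (- \<alpha> * t) * Z (aa t) \<omega> - exp (- \<alpha> * 0) * Z (aa 0) \<omega>
       - integral {0..t} (\<lambda>u. (- \<alpha> * exp (- \<alpha> * u)) * Z (aa u) \<omega>))"
  proof (rule RS_ibp[OF t])
    show "((\<lambda>s. exp (- \<alpha> * s)) has_real_derivative - \<alpha> * exp (- \<alpha> * x)) (at x)" for x
      by (auto intro!: derivative_eq_intros)
    show "continuous_on UNIV (\<lambda>x. - \<alpha> * exp (- \<alpha> * x))" by (intro continuous_intros)
    show "continuous_on {0..t} (\<lambda>s. Z (aa s) \<omega>)"
      using Zaa_isCont[OF w] continuous_at_imp_continuous_on by blast
  qed
  have "Y t \<omega> = exp (- \<alpha> * t) * Z (aa t) \<omega> - exp (- \<alpha> * 0) * Z (aa 0) \<omega>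
       - integral {0..t} (\<lambda>u. (- \<alpha> * exp (- \<alpha> * u)) * Z (aa u) \<omega>)"
  proof -
    have Yt: "Y t \<omega> = RS_integral (\<lambda>s. exp (- \<alpha> * s)) (\<lambda>s. Z (aa s) \<omega>) 0 t"
      unfolding aa_def using Y_def by blast
    show ?thesis unfolding Yt RS_unique[OF t RS] ..
  qed
  also have "integral {0..t} (\<lambda>u. (- \<alpha> * exp (- \<alpha> * u)) * Z (aa u) \<omega>) = - \<alpha> * integral {0..t} (\<lambda>u. U u \<omega>)"
  proof -
    have "integral {0..t} (\<lambda>u. (- \<alpha> * exp (- \<alpha> * u)) * Z (aa u) \<omega>) = integral {0..t} (\<lambda>u. (- \<alpha>) * U u \<omega>)"
      unfolding U_def by (simp add: algebra_simps)
    also have "\<dots> = - \<alpha> * integral {0..t} (\<lambda>u. U u \<omega>)"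
      by (rule integral_mult[symmetric]) (rule integrable_continuous_real[OF U_cont_on[OF w]])
    finally show ?thesis .
  qed
  finally show ?thesis unfolding U_def by simp
qed

lemma Y_diff:
  assumes w: "\<omega> \<in> space M" and s: "0 \<le> s" and st: "s \<le> t"
  shows "Y t \<omega> - Y s \<omega> = U t \<omega> - U s \<omega> + \<alpha> * (LBINT u:{s..t}. U u \<omega>)"
proof -
  have ic: "(\<lambda>u. U u \<omega>) integrable_on {0..t}" by (rule integrable_continuous_real[OF U_cont_on[OF w]])
  have "integral {0..s} (\<lambda>u. U u \<omega>) + integral {s..t} (\<lambda>u. U u \<omega>) = integral {0..t} (\<lambda>u. U u \<omega>)"
    by (rule Henstock_Kurzweil_Integration.integral_combine[OF s st ic])
  moreover have "(LBINT u:{s..t}. U u \<omega>) = integral {s..t} (\<lambda>u. U u \<omega>)"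
    by (rule set_borel_integral_eq_integral(2)[OF borel_integrable_atLeastAtMost'[OF U_cont_on[OF w]]])
  ultimately have "\<alpha> * integral {0..t} (\<lambda>u. U u \<omega>) = \<alpha> * integral {0..s} (\<lambda>u. U u \<omega>) + \<alpha> * (LBINT u:{s..t}. U u \<omega>)"
    by (metis distrib_left)
  then show ?thesis
    using Y_repr[OF w s] Y_repr[OF w order.trans[OF s st]] by linarith
qed

lemma Y_zero: "\<omega> \<in> space M \<Longrightarrow> Y 0 \<omega> = 0"
  using Y_repr[of \<omega> 0] by simp

end


context fbm_ctx
begin

lemma U_abs: "integrable M (U u)" "integral\<^sup>L M (\<lambda>\<omega>. \<bar>U u \<omega>\<bar>) \<le> c0 \<alpha> H 0 + 1"
proof -
  have b: "\<bar>x\<bar> \<le> x * x + 1" for x :: real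
  proof (cases "\<bar>x\<bar> \<le> 1")
    case True
    have "0 \<le> x * x" by simp
    then show ?thesis using True by linarith
  next
    case False
    then have "\<bar>x\<bar> * 1 \<le> \<bar>x\<bar> * \<bar>x\<bar>" by (intro mult_left_mono) auto
    then show ?thesis by (simp add: abs_mult_self_eq)
  qed
  have s: "integrable M (\<lambda>\<omega>. U u \<omega> * U u \<omega> + 1)" using U_sq_int by simp
  show i: "integrable M (U u)"
    using s by (rule Bochner_Integration.integrable_bound) (use b in \<open>auto intro!: AE_I2\<close>)
  have "integral\<^sup>L M (\<lambda>\<omega>. \<bar>U u \<omega>\<bar>) \<le> integral\<^sup>L M (\<lambda>\<omega>. U u \<omega> * U u \<omega> + 1)"
    by (rule integral_mono[OF integrable_abs[OF i] s]) (use b in auto)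
  also have "\<dots> = c0 \<alpha> H 0 + 1" using U_sq_int U_cov[of u u] by (simp add: prob_space)
  finally show "integral\<^sup>L M (\<lambda>\<omega>. \<bar>U u \<omega>\<bar>) \<le> c0 \<alpha> H 0 + 1" .
qed

lemma I_int: "integrable M (\<lambda>\<omega>. LBINT u:{s..t}. U u \<omega>)"
  by (rule fubini_set(1)[OF U_joint U_abs(1) U_abs(2)])

lemma I_meas[measurable]: "(\<lambda>\<omega>. LBINT u:{s..t}. U u \<omega>) \<in> borel_measurable M"
  using I_int by auto

lemma XI:
  fixes X :: "'a \<Rightarrow> real"
  assumes Xm[measurable]: "X \<in> borel_measurable M" and Xi: "integrable M (\<lambda>\<omega>. X \<omega> * X \<omega>)"
  shows "integrable M (\<lambda>\<omega>. X \<omega> * (LBINT u:{s..t}. U u \<omega>))"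
    and "integral\<^sup>L M (\<lambda>\<omega>. X \<omega> * (LBINT u:{s..t}. U u \<omega>)) = (LBINT u:{s..t}. integral\<^sup>L M (\<lambda>\<omega>. X \<omega> * U u \<omega>))"
proof -
  have Pm: "(\<lambda>p. X (snd p) * U (fst p) (snd p)) \<in> borel_measurable (lborel \<Otimes>\<^sub>M M)" by measurable
  have Pi: "integrable M (\<lambda>\<omega>. X \<omega> * U u \<omega>)" for u
    by (rule prod_int_bound(1)[OF Xm U_meas Xi U_sq_int])
  have Pb: "integral\<^sup>L M (\<lambda>\<omega>. \<bar>X \<omega> * U u \<omega>\<bar>) \<le> integral\<^sup>L M (\<lambda>\<omega>. X \<omega> * X \<omega>) + c0 \<alpha> H 0" for u
    using prod_int_bound(2)[OF Xm U_meas Xi U_sq_int, of u] U_cov[of u u] by simp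
  have e: "(LBINT u:{s..t}. X \<omega> * U u \<omega>) = X \<omega> * (LBINT u:{s..t}. U u \<omega>)" for \<omega> by simp
  show "integrable M (\<lambda>\<omega>. X \<omega> * (LBINT u:{s..t}. U u \<omega>))"
    using fubini_set(1)[of "\<lambda>u \<omega>. X \<omega> * U u \<omega>" s t, OF Pm Pi Pb] unfolding e .
  show "integral\<^sup>L M (\<lambda>\<omega>. X \<omega> * (LBINT u:{s..t}. U u \<omega>)) = (LBINT u:{s..t}. integral\<^sup>L M (\<lambda>\<omega>. X \<omega> * U u \<omega>))"
    using fubini_set(2)[of "\<lambda>u \<omega>. X \<omega> * U u \<omega>" s t, OF Pm Pi Pb] unfolding e .
qed

lemma I_sq_int:
  assumes st: "s \<le> t"
  shows "integrable M (\<lambda>\<omega>. (LBINT u:{s..t}. U u \<omega>) * (LBINT u:{s..t}. U u \<omega>))"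
proof -
  have Pm: "(\<lambda>p. U (fst p) (snd p) * U (fst p) (snd p)) \<in> borel_measurable (lborel \<Otimes>\<^sub>M M)" by measurable
  have Pb: "integral\<^sup>L M (\<lambda>\<omega>. \<bar>U u \<omega> * U u \<omega>\<bar>) \<le> c0 \<alpha> H 0" for u
    using U_cov[of u u] by simp
  have J: "integrable M (\<lambda>\<omega>. LBINT u:{s..t}. U u \<omega> * U u \<omega>)"
    by (rule fubini_set(1)[of "\<lambda>u \<omega>. U u \<omega> * U u \<omega>" s t, OF Pm U_sq_int Pb])
  have J2: "integrable M (\<lambda>\<omega>. (t - s) * (LBINT u:{s..t}. U u \<omega> * U u \<omega>))"
    using J by simp
  show ?thesis
  proof (rule Bochner_Integration.integrable_bound[OF J2])
    show "(\<lambda>\<omega>. (LBINT u:{s..t}. U u \<omega>) * (LBINT u:{s..t}. U u \<omega>)) \<in> borel_measurable M" by measurable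
    show "AE \<omega> in M. norm ((LBINT u:{s..t}. U u \<omega>) * (LBINT u:{s..t}. U u \<omega>))
        \<le> norm ((t - s) * (LBINT u:{s..t}. U u \<omega> * U u \<omega>))"
    proof (rule AE_I2)
      fix \<omega> assume w: "\<omega> \<in> space M"
      have "(LBINT u:{s..t}. U u \<omega>)^2 \<le> (t - s) * (LBINT u:{s..t}. (U u \<omega>)^2)"
        by (rule cs_lb[OF st U_cont_on[OF w]])
      then show "norm ((LBINT u:{s..t}. U u \<omega>) * (LBINT u:{s..t}. U u \<omega>))
        \<le> norm ((t - s) * (LBINT u:{s..t}. U u \<omega> * U u \<omega>))"
        by (simp add: power2_eq_square)
    qed
  qed
qed

lemma LB1:
  assumes sv: "s \<le> v" and vt: "v \<le> t"
  shows "(LBINT w:{s..t}. c0 \<alpha> H \<bar>v - w\<bar>) = (C1 \<alpha> H (v - s) - C1 \<alpha> H 0) + (C1 \<alpha> H (t - v) - C1 \<alpha> H 0)"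
proof -
  have c: "continuous_on {s..t} (\<lambda>w. c0 \<alpha> H \<bar>v - w\<bar>)"
    by (intro continuous_on_compose2[OF cont_c0[OF H1 H2 al]] continuous_intros) auto
  show ?thesis
    unfolding set_borel_integral_eq_integral(2)[OF borel_integrable_atLeastAtMost'[OF c]]
    by (rule integral_unique[OF L1[OF H1 H2 al sv vt]])
qed

lemma LB3:
  assumes s0: "0 \<le> s" and st: "s \<le> t"
  shows "(LBINT u:{s..t}. (C1 \<alpha> H (u - s) - C1 \<alpha> H 0) + (C1 \<alpha> H (t - u) - C1 \<alpha> H 0))
     = 2 * (C2 \<alpha> H (t - s) - C2 \<alpha> H 0) - 2 * (t - s) * C1 \<alpha> H 0"
proof -
  have cc: "continuous_on {0..t} (C1 \<alpha> H)" by (rule C1_cont[OF H1 H2 al]) simp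
  have c: "continuous_on {s..t} (\<lambda>u. (C1 \<alpha> H (u - s) - C1 \<alpha> H 0) + (C1 \<alpha> H (t - u) - C1 \<alpha> H 0))"
    using st s0
    by (intro continuous_intros continuous_on_compose2[OF cc]) auto
  show ?thesis
    unfolding set_borel_integral_eq_integral(2)[OF borel_integrable_atLeastAtMost'[OF c]]
    by (rule integral_unique[OF L3[OF H1 H2 al st]])
qed

lemma main_sq:
  assumes s0: "0 \<le> s" and st: "s \<le> t"
  defines "A \<equiv> \<lambda>\<omega>. U t \<omega> - U s \<omega> + \<alpha> * (LBINT u:{s..t}. U u \<omega>)"
  shows "integrable M (\<lambda>\<omega>. A \<omega> * A \<omega>)"
    and "integral\<^sup>L M (\<lambda>\<omega>. A \<omega> * A \<omega>) = 2 * GG \<alpha> H (t - s)"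
proof -
  define I where "I \<omega> = (LBINT u:{s..t}. U u \<omega>)" for \<omega>
  have Im[measurable]: "I \<in> borel_measurable M" unfolding I_def by measurable
  have ItI: "integrable M (\<lambda>\<omega>. U t \<omega> * I \<omega>)" and ItV: "integral\<^sup>L M (\<lambda>\<omega>. U t \<omega> * I \<omega>) = (LBINT u:{s..t}. c0 \<alpha> H \<bar>t - u\<bar>)"
    using XI[OF U_meas U_sq_int, of t s t] U_cov unfolding I_def by simp_all
  have IsI: "integrable M (\<lambda>\<omega>. U s \<omega> * I \<omega>)" and IsV: "integral\<^sup>L M (\<lambda>\<omega>. U s \<omega> * I \<omega>) = (LBINT u:{s..t}. c0 \<alpha> H \<bar>s - u\<bar>)"
    using XI[OF U_meas U_sq_int, of s s t] U_cov unfolding I_def by simp_all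
  have IIi: "integrable M (\<lambda>\<omega>. I \<omega> * I \<omega>)" using I_sq_int[OF st] unfolding I_def .
  have IIv: "integral\<^sup>L M (\<lambda>\<omega>. I \<omega> * I \<omega>) = 2 * (C2 \<alpha> H (t - s) - C2 \<alpha> H 0) - 2 * (t - s) * C1 \<alpha> H 0"
  proof -
    have "integral\<^sup>L M (\<lambda>\<omega>. I \<omega> * I \<omega>) = (LBINT u:{s..t}. integral\<^sup>L M (\<lambda>\<omega>. I \<omega> * U u \<omega>))"
      using XI(2)[OF Im IIi, of s t] unfolding I_def .
    also have "\<dots> = (LBINT u:{s..t}. (C1 \<alpha> H (u - s) - C1 \<alpha> H 0) + (C1 \<alpha> H (t - u) - C1 \<alpha> H 0))"
    proof (rule set_lebesgue_integral_cong, simp, intro allI impI)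
      fix u assume u: "u \<in> {s..t}"
      have "integral\<^sup>L M (\<lambda>\<omega>. I \<omega> * U u \<omega>) = integral\<^sup>L M (\<lambda>\<omega>. U u \<omega> * I \<omega>)"
        by (simp add: mult.commute)
      also have "\<dots> = (LBINT v:{s..t}. c0 \<alpha> H \<bar>u - v\<bar>)"
        using XI(2)[OF U_meas U_sq_int, of u s t] U_cov unfolding I_def by simp
      also have "\<dots> = (C1 \<alpha> H (u - s) - C1 \<alpha> H 0) + (C1 \<alpha> H (t - u) - C1 \<alpha> H 0)"
        using u by (intro LB1) auto
      finally show "integral\<^sup>L M (\<lambda>\<omega>. I \<omega> * U u \<omega>) = (C1 \<alpha> H (u - s) - C1 \<alpha> H 0) + (C1 \<alpha> H (t - u) - C1 \<alpha> H 0)" .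
    qed
    also have "\<dots> = 2 * (C2 \<alpha> H (t - s) - C2 \<alpha> H 0) - 2 * (t - s) * C1 \<alpha> H 0"
      by (rule LB3[OF s0 st])
    finally show ?thesis .
  qed
  have tV: "(LBINT u:{s..t}. c0 \<alpha> H \<bar>t - u\<bar>) = C1 \<alpha> H (t - s) - C1 \<alpha> H 0"
    using LB1[of s t t] st by simp
  have sV: "(LBINT u:{s..t}. c0 \<alpha> H \<bar>s - u\<bar>) = C1 \<alpha> H (t - s) - C1 \<alpha> H 0"
    using LB1[of s s t] st by simp
  define T1 where "T1 \<omega> = U t \<omega> * U t \<omega> + U s \<omega> * U s \<omega> - 2 * (U t \<omega> * U s \<omega>)" for \<omega>
  define T2 where "T2 \<omega> = (2 * \<alpha>) * (U t \<omega> * I \<omega>) - (2 * \<alpha>) * (U s \<omega> * I \<omega>)" for \<omega>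
  define T3 where "T3 \<omega> = \<alpha>^2 * (I \<omega> * I \<omega>)" for \<omega>
  have alg: "(a - b + \<alpha> * c) * (a - b + \<alpha> * c) = (a * a + b * b - 2 * (a * b))
      + (((2 * \<alpha>) * (a * c) - (2 * \<alpha>) * (b * c)) + \<alpha>^2 * (c * c))" for a b c :: real
    by (simp add: power2_eq_square algebra_simps)
  have expand: "A \<omega> * A \<omega> = T1 \<omega> + (T2 \<omega> + T3 \<omega>)" for \<omega>
    unfolding A_def T1_def T2_def T3_def I_def by (rule alg)
  have i1: "integrable M T1" unfolding T1_def using U_prod_int by auto
  have i2: "integrable M T2" unfolding T2_def using ItI IsI by auto
  have i3: "integrable M T3" unfolding T3_def using IIi by auto
  show "integrable M (\<lambda>\<omega>. A \<omega> * A \<omega>)"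
    unfolding expand by (intro Bochner_Integration.integrable_add i1 i2 i3)
  have v1: "integral\<^sup>L M T1 = c0 \<alpha> H 0 + c0 \<alpha> H 0 - 2 * c0 \<alpha> H (t - s)"
    unfolding T1_def using U_prod_int st by (simp add: U_cov)
  have v2: "integral\<^sup>L M T2 = 0"
    unfolding T2_def using ItI IsI by (simp add: ItV IsV tV sV)
  have v3: "integral\<^sup>L M T3 = \<alpha>^2 * (2 * (C2 \<alpha> H (t - s) - C2 \<alpha> H 0) - 2 * (t - s) * C1 \<alpha> H 0)"
    unfolding T3_def using IIi by (simp add: IIv)
  have "integral\<^sup>L M (\<lambda>\<omega>. A \<omega> * A \<omega>) = integral\<^sup>L M T1 + (integral\<^sup>L M T2 + integral\<^sup>L M T3)"
    unfolding expand using i1 i2 i3 by simp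
  also have "\<dots> = 2 * GG \<alpha> H (t - s)"
    unfolding v1 v2 v3 using G_eq[OF H1 H2 al, of "t - s"] st by (simp add: algebra_simps)
  finally show "integral\<^sup>L M (\<lambda>\<omega>. A \<omega> * A \<omega>) = 2 * GG \<alpha> H (t - s)" .
qed

end


context fbm_Y
begin

lemma sq_diff:
  assumes s0: "0 \<le> s" and st: "s \<le> t"
  shows "integrable M (\<lambda>\<omega>. (Y t \<omega> - Y s \<omega>)\<^sup>2)"
    and "integral\<^sup>L M (\<lambda>\<omega>. (Y t \<omega> - Y s \<omega>)\<^sup>2) = 2 * GG \<alpha> H (t - s)"
proof -
  define A where "A \<omega> = U t \<omega> - U s \<omega> + \<alpha> * (LBINT u:{s..t}. U u \<omega>)" for \<omega>
  have eq: "(Y t \<omega> - Y s \<omega>)\<^sup>2 = A \<omega> * A \<omega>" if "\<omega> \<in> space M" for \<omega>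
    using Y_diff[OF that s0 st] unfolding A_def by (simp add: power2_eq_square)
  have i: "integrable M (\<lambda>\<omega>. A \<omega> * A \<omega>)" using main_sq(1)[OF s0 st] unfolding A_def .
  show "integrable M (\<lambda>\<omega>. (Y t \<omega> - Y s \<omega>)\<^sup>2)"
    using i by (subst Bochner_Integration.integrable_cong[OF refl eq]) auto
  have "integral\<^sup>L M (\<lambda>\<omega>. (Y t \<omega> - Y s \<omega>)\<^sup>2) = integral\<^sup>L M (\<lambda>\<omega>. A \<omega> * A \<omega>)"
    by (rule Bochner_Integration.integral_cong[OF refl eq])
  also have "\<dots> = 2 * GG \<alpha> H (t - s)" using main_sq(2)[OF s0 st] unfolding A_def .
  finally show "integral\<^sup>L M (\<lambda>\<omega>. (Y t \<omega> - Y s \<omega>)\<^sup>2) = 2 * GG \<alpha> H (t - s)" .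
qed

lemma sq:
  assumes t: "0 \<le> t"
  shows "integrable M (\<lambda>\<omega>. (Y t \<omega>)\<^sup>2)" and "integral\<^sup>L M (\<lambda>\<omega>. (Y t \<omega>)\<^sup>2) = 2 * GG \<alpha> H t"
proof -
  have eq: "(Y t \<omega>)\<^sup>2 = (Y t \<omega> - Y 0 \<omega>)\<^sup>2" if "\<omega> \<in> space M" for \<omega>
    using Y_zero[OF that] by simp
  show "integrable M (\<lambda>\<omega>. (Y t \<omega>)\<^sup>2)"
    using sq_diff(1)[of 0 t] t by (subst Bochner_Integration.integrable_cong[OF refl eq]) auto
  have "integral\<^sup>L M (\<lambda>\<omega>. (Y t \<omega>)\<^sup>2) = integral\<^sup>L M (\<lambda>\<omega>. (Y t \<omega> - Y 0 \<omega>)\<^sup>2)"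
    by (rule Bochner_Integration.integral_cong[OF refl eq])
  then show "integral\<^sup>L M (\<lambda>\<omega>. (Y t \<omega>)\<^sup>2) = 2 * GG \<alpha> H t"
    using sq_diff(2)[of 0 t] t by simp
qed

lemma cov:
  assumes s0: "0 \<le> s" and st: "s \<le> t"
  shows "integral\<^sup>L M (\<lambda>\<omega>. Y t \<omega> * Y s \<omega>) = GG \<alpha> H t + GG \<alpha> H s - GG \<alpha> H (t - s)"
proof -
  have eq: "Y t \<omega> * Y s \<omega> = ((Y t \<omega>)\<^sup>2 + (Y s \<omega>)\<^sup>2 - (Y t \<omega> - Y s \<omega>)\<^sup>2) / 2" for \<omega>
    by (simp add: power2_eq_square algebra_simps)
  have i1: "integrable M (\<lambda>\<omega>. (Y t \<omega>)\<^sup>2)" using sq(1)[of t] s0 st by simp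
  have i2: "integrable M (\<lambda>\<omega>. (Y s \<omega>)\<^sup>2)" using sq(1)[of s] s0 by simp
  have i3: "integrable M (\<lambda>\<omega>. (Y t \<omega> - Y s \<omega>)\<^sup>2)" using sq_diff(1)[OF s0 st] .
  have "integral\<^sup>L M (\<lambda>\<omega>. Y t \<omega> * Y s \<omega>)
      = (integral\<^sup>L M (\<lambda>\<omega>. (Y t \<omega>)\<^sup>2) + integral\<^sup>L M (\<lambda>\<omega>. (Y s \<omega>)\<^sup>2) - integral\<^sup>L M (\<lambda>\<omega>. (Y t \<omega> - Y s \<omega>)\<^sup>2)) / 2"
    unfolding eq using i1 i2 i3 by simp
  also have "\<dots> = GG \<alpha> H t + GG \<alpha> H s - GG \<alpha> H (t - s)"
    using sq(2)[of t] sq(2)[of s] sq_diff(2)[OF s0 st] s0 st by simp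
  finally show ?thesis .
qed

end

theorem proposition3p5:
  fixes M :: "'a measure" and H \<alpha> :: real
    and Z Y :: "real \<Rightarrow> 'a \<Rightarrow> real"
  assumes H: "1/2 < H" "H < 1"
    and fbm: "fBm M H Z"
    and cont: "\<forall>\<omega>\<in>space M. continuous_on {0..} (\<lambda>t. Z t \<omega>)"
    and alpha: "\<alpha> > 0"
    and Y_def: "\<forall>t \<omega>. Y t \<omega> =
        RS_integral (\<lambda>s. exp (- \<alpha> * s)) (\<lambda>s. Z (H * exp (\<alpha> * s / H) / \<alpha>) \<omega>) 0 t"
  shows
    "(\<forall>s t. 0 \<le> s \<longrightarrow> s < t \<longrightarrow>
        integral\<^sup>L M (\<lambda>\<omega>. (Y t \<omega> - Y s \<omega>)\<^sup>2)
          = 2 * (LBINT x:{0..t - s}. (t - s - x) * k_fun \<alpha> H x)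
      \<and> integral\<^sup>L M (\<lambda>\<omega>. Y t \<omega> * Y s \<omega>)
          = (LBINT x:{0..t}. (t - x) * k_fun \<alpha> H x)
            + (LBINT x:{0..s}. (s - x) * k_fun \<alpha> H x)
            - (LBINT x:{0..t - s}. (t - s - x) * k_fun \<alpha> H x))
   \<and> (\<lambda>t. integral\<^sup>L M (\<lambda>\<omega>. (Y t \<omega>)\<^sup>2)) \<in> O[at_top](\<lambda>t. t)
   \<and> (\<forall>s\<ge>0. ((\<lambda>t. integral\<^sup>L M (\<lambda>\<omega>. Y t \<omega> * Y s \<omega>))
        \<longlongrightarrow> s * (LBINT x:{0<..}. k_fun \<alpha> H x)
              + (LBINT x:{0..s}. (s - x) * k_fun \<alpha> H x)) at_top)"
proof -
  interpret fbm_Y M H \<alpha> Z Y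
    by (unfold_locales) (use H fbm cont alpha Y_def in auto)
  have G: "GG \<alpha> H T = (LBINT x:{0..T}. (T - x) * k_fun \<alpha> H x)" for T unfolding GG_def ..
  have P1: "\<forall>s t. 0 \<le> s \<longrightarrow> s < t \<longrightarrow>
        integral\<^sup>L M (\<lambda>\<omega>. (Y t \<omega> - Y s \<omega>)\<^sup>2)
          = 2 * (LBINT x:{0..t - s}. (t - s - x) * k_fun \<alpha> H x)
      \<and> integral\<^sup>L M (\<lambda>\<omega>. Y t \<omega> * Y s \<omega>)
          = (LBINT x:{0..t}. (t - x) * k_fun \<alpha> H x)
            + (LBINT x:{0..s}. (s - x) * k_fun \<alpha> H x)
            - (LBINT x:{0..t - s}. (t - s - x) * k_fun \<alpha> H x)"
  proof (intro allI impI conjI)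
    fix s t :: real assume s0: "0 \<le> s" and st: "s < t"
    show "integral\<^sup>L M (\<lambda>\<omega>. (Y t \<omega> - Y s \<omega>)\<^sup>2) = 2 * (LBINT x:{0..t - s}. (t - s - x) * k_fun \<alpha> H x)"
      using sq_diff(2)[OF s0 less_imp_le[OF st]] unfolding G .
    show "integral\<^sup>L M (\<lambda>\<omega>. Y t \<omega> * Y s \<omega>)
          = (LBINT x:{0..t}. (t - x) * k_fun \<alpha> H x)
            + (LBINT x:{0..s}. (s - x) * k_fun \<alpha> H x)
            - (LBINT x:{0..t - s}. (t - s - x) * k_fun \<alpha> H x)"
      using cov[OF s0 less_imp_le[OF st]] unfolding G .
  qed
  have P2: "(\<lambda>t. integral\<^sup>L M (\<lambda>\<omega>. (Y t \<omega>)\<^sup>2)) \<in> O[at_top](\<lambda>t. t)"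
  proof (rule bigoI[where c="2 * (LBINT x:{0<..}. k_fun \<alpha> H x)"])
    show "\<forall>\<^sub>F t in at_top. norm (integral\<^sup>L M (\<lambda>\<omega>. (Y t \<omega>)\<^sup>2)) \<le> 2 * (LBINT x:{0<..}. k_fun \<alpha> H x) * norm t"
      using eventually_ge_at_top[of "0::real"]
    proof eventually_elim
      case (elim t)
      have "0 \<le> integral\<^sup>L M (\<lambda>\<omega>. (Y t \<omega>)\<^sup>2)" by simp
      moreover have "integral\<^sup>L M (\<lambda>\<omega>. (Y t \<omega>)\<^sup>2) = 2 * GG \<alpha> H t" using sq(2)[OF elim] .
      moreover have "GG \<alpha> H t \<le> t * (LBINT x:{0<..}. k_fun \<alpha> H x)" by (rule G_bound[OF H1 H2 al elim])
      ultimately show ?case using elim by (simp add: algebra_simps)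
    qed
  qed
  have P3: "\<forall>s\<ge>0. ((\<lambda>t. integral\<^sup>L M (\<lambda>\<omega>. Y t \<omega> * Y s \<omega>))
        \<longlongrightarrow> s * (LBINT x:{0<..}. k_fun \<alpha> H x)
              + (LBINT x:{0..s}. (s - x) * k_fun \<alpha> H x)) at_top"
  proof (intro allI impI)
    fix s :: real assume s0: "0 \<le> s"
    have lim: "((\<lambda>t. (GG \<alpha> H t - GG \<alpha> H (t - s)) + GG \<alpha> H s) \<longlongrightarrow>
        s * (LBINT x:{0<..}. k_fun \<alpha> H x) + GG \<alpha> H s) at_top"
      by (intro tendsto_add G_lim[OF H1 H2 al s0] tendsto_const)
    have "eventually (\<lambda>t. (GG \<alpha> H t - GG \<alpha> H (t - s)) + GG \<alpha> H s = integral\<^sup>L M (\<lambda>\<omega>. Y t \<omega> * Y s \<omega>)) at_top"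
      using eventually_ge_at_top[of s] by eventually_elim (use cov s0 in simp)
    from tendsto_cong[OF this] lim
    show "((\<lambda>t. integral\<^sup>L M (\<lambda>\<omega>. Y t \<omega> * Y s \<omega>))
        \<longlongrightarrow> s * (LBINT x:{0<..}. k_fun \<alpha> H x)
              + (LBINT x:{0..s}. (s - x) * k_fun \<alpha> H x)) at_top"
      unfolding G by simp
  qed
  show ?thesis using P1 P2 P3 by blast
qed


end
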